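(* Let $H$ be a bialgebra, $\mathcal{A}$ an $H$-bimodule algebra, $\mathbb{A}$ an $H$-bicomodule algebra and $A$ an algebra in the Yetter–Drinfeld category ${}^H_H\mathcal{YD}$. Then: the generalized smash product $\mathcal{A}\blacktriangleright\!\!<A$ is an $H$-bimodule algebra with actions $h\cdot(\varphi\blacktriangleright\!\!<a)=h_1\cdot\varphi\blacktriangleright\!\!<h_2\cdot a$ and $(\varphi\blacktriangleright\!\!<a)\cdot h=\varphi\cdot h\blacktriangleright\!\!<a$; the generalized smash product $A\blacktriangleright\!\!<\mathbb{A}$ is an $H$-bicomodule algebra with coactions $\rho(a\blacktriangleright\!\!<u)=(a\blacktriangleright\!\!<u_{<0>})\otimes u_{<1>}$ and $\lambda(a\blacktriangleright\!\!<u)=a_{(-1)}u_{[-1]}\otimes(a_{(0)}\blacktriangleright\!\!<u_{[0]})$; and the identity map of $\mathcal{A}\otimes A\otimes\mathbb{A}$ is an algebra isomorphism $(\mathcal{A}\blacktriangleright\!\!<A)\natural\mathbb{A}\cong\mathcal{A}\natural(A\blacktriangleright\!\!<\mathbb{A})$.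
   Context: Work over a field $k$; $H$ an ordinary bialgebra, $\Delta(h)=h_1\otimes h_2$. An $H$-bimodule algebra is an associative unital algebra $\mathcal{A}$ which is an $H$-bimodule with $h\cdot(\varphi\psi)=(h_1\cdot\varphi)(h_2\cdot\psi)$, $(\varphi\psi)\cdot h=(\varphi\cdot h_1)(\psi\cdot h_2)$, $h\cdot1=1\cdot h=\varepsilon(h)1$. An $H$-bicomodule algebra is an associative unital algebra $\mathbb{A}$ with algebra maps $\lambda(u)=u_{[-1]}\otimes u_{[0]}$ (left $H$-coaction) and $\rho(u)=u_{<0>}\otimes u_{<1>}$ (right $H$-coaction) making $\mathbb{A}$ an $H$-bicomodule. An algebra $A$ in ${}^H_H\mathcal{YD}$ is a left $H$-module algebra (action $h\cdot a$) and left $H$-comodule algebra (coaction $a\mapsto a_{(-1)}\otimes a_{(0)}$) such that $h_1a_{(-1)}\otimes h_2\cdot a_{(0)}=(h_1\cdot a)_{(-1)}h_2\otimes(h_1\cdot a)_{(0)}$. For a left $H$-module algebra $M$ and a left $H$-comodule algebra $N$ (coaction $n\mapsto n_{\{-1\}}\otimes n_{\{0\}}$), the generalized smash product $M\blacktriangleright\!\!<N$ is $M\otimes N$ with product $(m\blacktriangleright\!\!<n)(m'\blacktriangleright\!\!<n')=m(n_{\{-1\}}\cdot m')\blacktriangleright\!\!<n_{\{0\}}n'$ (here $\mathcal{A}$ is viewed as a left $H$-module algebra via its left action). For an $H$-bimodule algebra $\mathcal{B}$ and $H$-bicomodule algebra $\mathbb{B}$, the L-R-smash product $\mathcal{B}\natural\mathbb{B}$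 is $\mathcal{B}\otimes\mathbb{B}$ with product $(\varphi\natural u)(\psi\natural u')=(\varphi\cdot u'_{<1>})(u_{[-1]}\cdot\psi)\natural u_{[0]}u'_{<0>}$. *)

theory Defs
  imports Main "HOL.Vector_Spaces"
begin

text \<open>Vector spaces over a field 'k presented as setoids: a carrier type with operations
 and an equivalence relation (equality for honest vector spaces, the tensor-product
 equivalence for formal sums of simple tensors).\<close>

record ('k,'x) svsp =
  vadd :: "'x \<Rightarrow> 'x \<Rightarrow> 'x"
  vzero :: 'x
  vsc :: "'k \<Rightarrow> 'x \<Rightarrow> 'x"
  veq :: "'x \<Rightarrow> 'x \<Rightarrow> bool"

definition vsum :: "('k,'x) svsp \<Rightarrow> 'x list \<Rightarrow> 'x" where
  "vsum X xs = foldr (vadd X) xs (vzero X)"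

definition plainvs :: "('k \<Rightarrow> 'x \<Rightarrow> 'x) \<Rightarrow> ('k,'x::ab_group_add) svsp" where
  "plainvs s = \<lparr>vadd = (+), vzero = 0, vsc = s, veq = (=)\<rparr>"

definition svs :: "('k::field,'x) svsp \<Rightarrow> bool" where
  "svs X \<longleftrightarrow> equivp (veq X) \<and>
    (\<forall>x x' y y'. veq X x x' \<longrightarrow> veq X y y' \<longrightarrow> veq X (vadd X x y) (vadd X x' y')) \<and>
    (\<forall>c x x'. veq X x x' \<longrightarrow> veq X (vsc X c x) (vsc X c x')) \<and>
    (\<forall>x y z. veq X (vadd X (vadd X x y) z) (vadd X x (vadd X y z))) \<and>
    (\<forall>x y. veq X (vadd X x y) (vadd X y x)) \<and>
    (\<forall>x. veq X (vadd X (vzero X) x) x) \<and>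
    (\<forall>x. veq X (vadd X x (vsc X (-1) x)) (vzero X)) \<and>
    (\<forall>c x y. veq X (vsc X c (vadd X x y)) (vadd X (vsc X c x) (vsc X c y))) \<and>
    (\<forall>c d x. veq X (vsc X (c + d) x) (vadd X (vsc X c x) (vsc X d x))) \<and>
    (\<forall>c d x. veq X (vsc X (c * d) x) (vsc X c (vsc X d x))) \<and>
    (\<forall>x. veq X (vsc X 1 x) x)"

definition lfun :: "('k::field,'x) svsp \<Rightarrow> ('x \<Rightarrow> 'k) \<Rightarrow> bool" where
  "lfun X f \<longleftrightarrow> (\<forall>x y. f (vadd X x y) = f x + f y) \<and> (\<forall>c x. f (vsc X c x) = c * f x)
     \<and> (\<forall>x y. veq X x y \<longrightarrow> f x = f y)"

definition bilin :: "('k::field,'x) svsp \<Rightarrow> ('k,'y) svsp \<Rightarrow> ('x \<Rightarrow> 'y \<Rightarrow> 'k) \<Rightarrow> bool" where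
  "bilin V W f \<longleftrightarrow> (\<forall>y. lfun V (\<lambda>x. f x y)) \<and> (\<forall>x. lfun W (f x))"

text \<open>Tensor product V \<otimes> W: elements are represented by finite lists of simple tensors
 (formal sums); two representatives are identified iff every bilinear form V \<times> W \<rightarrow> k takes
 the same value on them (over a field, linear functionals separate points of V \<otimes> W and
 these are exactly the bilinear forms).\<close>

definition tens :: "('k::field,'x) svsp \<Rightarrow> ('k,'y) svsp \<Rightarrow> ('k, ('x \<times> 'y) list) svsp" where
  "tens V W = \<lparr>vadd = (@), vzero = [], vsc = (\<lambda>c. map (\<lambda>(x,y). (vsc V c x, y))),
     veq = (\<lambda>xs ys. \<forall>f. bilin V W f \<longrightarrow>
        sum_list (map (\<lambda>(x,y). f x y) xs) = sum_list (map (\<lambda>(x,y). f x y) ys))\<rparr>"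

definition slin :: "('k::field,'x) svsp \<Rightarrow> ('k,'y) svsp \<Rightarrow> ('x \<Rightarrow> 'y) \<Rightarrow> bool" where
  "slin X Y f \<longleftrightarrow> (\<forall>x x'. veq X x x' \<longrightarrow> veq Y (f x) (f x')) \<and>
     (\<forall>x y. veq Y (f (vadd X x y)) (vadd Y (f x) (f y))) \<and>
     (\<forall>c x. veq Y (f (vsc X c x)) (vsc Y c (f x)))"

definition salg :: "('k::field,'x) svsp \<Rightarrow> ('x \<Rightarrow> 'x \<Rightarrow> 'x) \<Rightarrow> 'x \<Rightarrow> bool" where
  "salg X m u \<longleftrightarrow> svs X \<and>
     (\<forall>x x' y y'. veq X x x' \<longrightarrow> veq X y y' \<longrightarrow> veq X (m x y) (m x' y')) \<and>
     (\<forall>x y z. veq X (m (vadd X x y) z) (vadd X (m x z) (m y z))) \<and>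
     (\<forall>x y z. veq X (m x (vadd X y z)) (vadd X (m x y) (m x z))) \<and>
     (\<forall>c x y. veq X (m (vsc X c x) y) (vsc X c (m x y))) \<and>
     (\<forall>c x y. veq X (m x (vsc X c y)) (vsc X c (m x y))) \<and>
     (\<forall>x y z. veq X (m (m x y) z) (m x (m y z))) \<and>
     (\<forall>x. veq X (m u x) x) \<and> (\<forall>x. veq X (m x u) x)"

record ('k,'h) bialg =
  hsc :: "'k \<Rightarrow> 'h \<Rightarrow> 'h"
  hmul :: "'h \<Rightarrow> 'h \<Rightarrow> 'h"
  hone :: 'h
  hcom :: "'h \<Rightarrow> ('h \<times> 'h) list"
  hcou :: "'h \<Rightarrow> 'k"

definition HV :: "('k,'h::ab_group_add) bialg \<Rightarrow> ('k,'h) svsp" where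
  "HV H = plainvs (hsc H)"

definition bialgebra :: "('k::field,'h::ab_group_add) bialg \<Rightarrow> bool" where
  "bialgebra H \<longleftrightarrow> vector_space (hsc H) \<and> salg (HV H) (hmul H) (hone H) \<and>
    slin (HV H) (tens (HV H) (HV H)) (hcom H) \<and> lfun (HV H) (hcou H) \<and>
    (\<forall>h. veq (tens (HV H) (tens (HV H) (HV H)))
        [(x1, [(x2, y)]). (x, y) \<leftarrow> hcom H h, (x1, x2) \<leftarrow> hcom H x]
        [(x, hcom H y). (x, y) \<leftarrow> hcom H h]) \<and>
    (\<forall>h. vsum (HV H) [hsc H (hcou H x) y. (x, y) \<leftarrow> hcom H h] = h) \<and>
    (\<forall>h. vsum (HV H) [hsc H (hcou H y) x. (x, y) \<leftarrow> hcom H h] = h) \<and>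
    (\<forall>h g. veq (tens (HV H) (HV H)) (hcom H (hmul H h g))
        [(hmul H x1 y1, hmul H x2 y2). (x1, x2) \<leftarrow> hcom H h, (y1, y2) \<leftarrow> hcom H g]) \<and>
    veq (tens (HV H) (HV H)) (hcom H (hone H)) [(hone H, hone H)] \<and>
    (\<forall>h g. hcou H (hmul H h g) = hcou H h * hcou H g) \<and> hcou H (hone H) = 1"

definition lmodalg :: "('k::field,'h::ab_group_add) bialg \<Rightarrow> ('k,'x) svsp \<Rightarrow>
    ('x \<Rightarrow> 'x \<Rightarrow> 'x) \<Rightarrow> 'x \<Rightarrow> ('h \<Rightarrow> 'x \<Rightarrow> 'x) \<Rightarrow> bool" where
  "lmodalg H X m u la \<longleftrightarrow> salg X m u \<and>
    (\<forall>h. slin X X (la h)) \<and> (\<forall>x. slin (HV H) X (\<lambda>h. la h x)) \<and>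
    (\<forall>h g x. veq X (la (hmul H h g) x) (la h (la g x))) \<and>
    (\<forall>x. veq X (la (hone H) x) x) \<and>
    (\<forall>h x y. veq X (la h (m x y)) (vsum X [m (la h1 x) (la h2 y). (h1, h2) \<leftarrow> hcom H h])) \<and>
    (\<forall>h. veq X (la h u) (vsc X (hcou H h) u))"

definition rmodalg :: "('k::field,'h::ab_group_add) bialg \<Rightarrow> ('k,'x) svsp \<Rightarrow>
    ('x \<Rightarrow> 'x \<Rightarrow> 'x) \<Rightarrow> 'x \<Rightarrow> ('x \<Rightarrow> 'h \<Rightarrow> 'x) \<Rightarrow> bool" where
  "rmodalg H X m u ra \<longleftrightarrow> salg X m u \<and>
    (\<forall>h. slin X X (\<lambda>x. ra x h)) \<and> (\<forall>x. slin (HV H) X (ra x)) \<and>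
    (\<forall>h g x. veq X (ra x (hmul H h g)) (ra (ra x h) g)) \<and>
    (\<forall>x. veq X (ra x (hone H)) x) \<and>
    (\<forall>h x y. veq X (ra (m x y) h) (vsum X [m (ra x h1) (ra y h2). (h1, h2) \<leftarrow> hcom H h])) \<and>
    (\<forall>h. veq X (ra u h) (vsc X (hcou H h) u))"

definition bimodalg :: "('k::field,'h::ab_group_add) bialg \<Rightarrow> ('k,'x) svsp \<Rightarrow>
    ('x \<Rightarrow> 'x \<Rightarrow> 'x) \<Rightarrow> 'x \<Rightarrow> ('h \<Rightarrow> 'x \<Rightarrow> 'x) \<Rightarrow> ('x \<Rightarrow> 'h \<Rightarrow> 'x) \<Rightarrow> bool" where
  "bimodalg H X m u la ra \<longleftrightarrow> lmodalg H X m u la \<and> rmodalg H X m u ra \<and>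
    (\<forall>h x g. veq X (la h (ra x g)) (ra (la h x) g))"

definition lcomodalg :: "('k::field,'h::ab_group_add) bialg \<Rightarrow> ('k,'x) svsp \<Rightarrow>
    ('x \<Rightarrow> 'x \<Rightarrow> 'x) \<Rightarrow> 'x \<Rightarrow> ('x \<Rightarrow> ('h \<times> 'x) list) \<Rightarrow> bool" where
  "lcomodalg H X m u co \<longleftrightarrow> salg X m u \<and>
    slin X (tens (HV H) X) co \<and>
    (\<forall>x. veq (tens (HV H) (tens (HV H) X))
        [(h1, [(h2, y)]). (h, y) \<leftarrow> co x, (h1, h2) \<leftarrow> hcom H h]
        [(h, co y). (h, y) \<leftarrow> co x]) \<and>
    (\<forall>x. veq X (vsum X [vsc X (hcou H h) y. (h, y) \<leftarrow> co x]) x) \<and>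
    (\<forall>x y. veq (tens (HV H) X) (co (m x y))
        [(hmul H h g, m x' y'). (h, x') \<leftarrow> co x, (g, y') \<leftarrow> co y]) \<and>
    veq (tens (HV H) X) (co u) [(hone H, u)]"

definition rcomodalg :: "('k::field,'h::ab_group_add) bialg \<Rightarrow> ('k,'x) svsp \<Rightarrow>
    ('x \<Rightarrow> 'x \<Rightarrow> 'x) \<Rightarrow> 'x \<Rightarrow> ('x \<Rightarrow> ('x \<times> 'h) list) \<Rightarrow> bool" where
  "rcomodalg H X m u co \<longleftrightarrow> salg X m u \<and>
    slin X (tens X (HV H)) co \<and>
    (\<forall>x. veq (tens X (tens (HV H) (HV H)))
        [(y0, [(y1, h)]). (y, h) \<leftarrow> co x, (y0, y1) \<leftarrow> co y]
        [(y, hcom H h). (y, h) \<leftarrow> co x]) \<and>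
    (\<forall>x. veq X (vsum X [vsc X (hcou H h) y. (y, h) \<leftarrow> co x]) x) \<and>
    (\<forall>x y. veq (tens X (HV H)) (co (m x y))
        [(m x' y', hmul H h g). (x', h) \<leftarrow> co x, (y', g) \<leftarrow> co y]) \<and>
    veq (tens X (HV H)) (co u) [(u, hone H)]"

definition bicomodalg :: "('k::field,'h::ab_group_add) bialg \<Rightarrow> ('k,'x) svsp \<Rightarrow>
    ('x \<Rightarrow> 'x \<Rightarrow> 'x) \<Rightarrow> 'x \<Rightarrow> ('x \<Rightarrow> ('h \<times> 'x) list) \<Rightarrow> ('x \<Rightarrow> ('x \<times> 'h) list) \<Rightarrow> bool" where
  "bicomodalg H X m u lam rho \<longleftrightarrow> lcomodalg H X m u lam \<and> rcomodalg H X m u rho \<and>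
    (\<forall>x. veq (tens (HV H) (tens X (HV H)))
        [(h, [(z, g)]). (y, g) \<leftarrow> rho x, (h, z) \<leftarrow> lam y]
        [(h, rho y). (h, y) \<leftarrow> lam x])"

text \<open>Algebras in the Yetter-Drinfeld category: left module algebra + left comodule algebra
 with h_1 a_(-1) \<otimes> h_2 \<cdot> a_(0) = (h_1 \<cdot> a)_(-1) h_2 \<otimes> (h_1 \<cdot> a)_(0).\<close>

definition ydalg :: "('k::field,'h::ab_group_add) bialg \<Rightarrow> ('k,'x) svsp \<Rightarrow>
    ('x \<Rightarrow> 'x \<Rightarrow> 'x) \<Rightarrow> 'x \<Rightarrow> ('h \<Rightarrow> 'x \<Rightarrow> 'x) \<Rightarrow> ('x \<Rightarrow> ('h \<times> 'x) list) \<Rightarrow> bool" where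
  "ydalg H X m u la co \<longleftrightarrow> lmodalg H X m u la \<and> lcomodalg H X m u co \<and>
    (\<forall>h a. veq (tens (HV H) X)
        [(hmul H h1 b, la h2 a0). (h1, h2) \<leftarrow> hcom H h, (b, a0) \<leftarrow> co a]
        [(hmul H c h2, a0). (h1, h2) \<leftarrow> hcom H h, (c, a0) \<leftarrow> co (la h1 a)])"

text \<open>Generalized smash product M \<blacktriangleright>< N (product on representatives, bilinearly extended):
 (m \<otimes> n)(m' \<otimes> n') = m (n_{-1} \<cdot> m') \<otimes> n_{0} n'.\<close>

definition gsm_mul :: "('m \<Rightarrow> 'm \<Rightarrow> 'm) \<Rightarrow> ('n \<Rightarrow> 'n \<Rightarrow> 'n) \<Rightarrow> ('h \<Rightarrow> 'm \<Rightarrow> 'm) \<Rightarrow>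
    ('n \<Rightarrow> ('h \<times> 'n) list) \<Rightarrow> ('m \<times> 'n) list \<Rightarrow> ('m \<times> 'n) list \<Rightarrow> ('m \<times> 'n) list" where
  "gsm_mul mM mN laM coN xs ys =
     [(mM p (laM h q), mN n0 n'). (p, n) \<leftarrow> xs, (q, n') \<leftarrow> ys, (h, n0) \<leftarrow> coN n]"

text \<open>L-R-smash product B \<natural> BB:
 (\<phi> \<otimes> u)(\<psi> \<otimes> u') = (\<phi> \<cdot> u'_<1>)(u_[-1] \<cdot> \<psi>) \<otimes> u_[0] u'_<0>.\<close>

definition lr_mul :: "('b \<Rightarrow> 'b \<Rightarrow> 'b) \<Rightarrow> ('u \<Rightarrow> 'u \<Rightarrow> 'u) \<Rightarrow> ('h \<Rightarrow> 'b \<Rightarrow> 'b) \<Rightarrow>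
    ('b \<Rightarrow> 'h \<Rightarrow> 'b) \<Rightarrow> ('u \<Rightarrow> ('h \<times> 'u) list) \<Rightarrow> ('u \<Rightarrow> ('u \<times> 'h) list) \<Rightarrow>
    ('b \<times> 'u) list \<Rightarrow> ('b \<times> 'u) list \<Rightarrow> ('b \<times> 'u) list" where
  "lr_mul mB mU laB raB lam rho xs ys =
     [(mB (raB p g) (laB h q), mU u0 u0'). (p, u) \<leftarrow> xs, (q, u') \<leftarrow> ys,
        (u0', g) \<leftarrow> rho u', (h, u0) \<leftarrow> lam u]"

definition sm_lact :: "('k,'h) bialg \<Rightarrow> ('h \<Rightarrow> 'p \<Rightarrow> 'p) \<Rightarrow> ('h \<Rightarrow> 'a \<Rightarrow> 'a) \<Rightarrow>
    'h \<Rightarrow> ('p \<times> 'a) list \<Rightarrow> ('p \<times> 'a) list" where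
  "sm_lact H laP laA h xs = [(laP h1 p, laA h2 a). (p, a) \<leftarrow> xs, (h1, h2) \<leftarrow> hcom H h]"

definition sm_ract :: "('p \<Rightarrow> 'h \<Rightarrow> 'p) \<Rightarrow> ('p \<times> 'a) list \<Rightarrow> 'h \<Rightarrow> ('p \<times> 'a) list" where
  "sm_ract raP xs h = [(raP p h, a). (p, a) \<leftarrow> xs]"

definition sm_rco :: "('u \<Rightarrow> ('u \<times> 'h) list) \<Rightarrow> ('a \<times> 'u) list \<Rightarrow> (('a \<times> 'u) list \<times> 'h) list" where
  "sm_rco rho xs = [([(a, u0)], g). (a, u) \<leftarrow> xs, (u0, g) \<leftarrow> rho u]"

definition sm_lco :: "('k,'h) bialg \<Rightarrow> ('a \<Rightarrow> ('h \<times> 'a) list) \<Rightarrow> ('u \<Rightarrow> ('h \<times> 'u) list) \<Rightarrow>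
    ('a \<times> 'u) list \<Rightarrow> ('h \<times> ('a \<times> 'u) list) list" where
  "sm_lco H coA lam xs = [(hmul H b h, [(a0, u0)]). (a, u) \<leftarrow> xs, (b, a0) \<leftarrow> coA a, (h, u0) \<leftarrow> lam u]"

text \<open>The identity of P \<otimes> A \<otimes> U, read from (P \<otimes> A) \<otimes> U to P \<otimes> (A \<otimes> U) on representatives.\<close>

definition reassoc :: "(('p \<times> 'a) list \<times> 'u) list \<Rightarrow> ('p \<times> ('a \<times> 'u) list) list" where
  "reassoc xs = [(p, [(a, u)]). (ys, u) \<leftarrow> xs, (p, a) \<leftarrow> ys]"

definition alg_iso :: "('k::field,'x) svsp \<Rightarrow> ('k,'y) svsp \<Rightarrow> ('x \<Rightarrow> 'x \<Rightarrow> 'x) \<Rightarrow> 'x \<Rightarrow>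
    ('y \<Rightarrow> 'y \<Rightarrow> 'y) \<Rightarrow> 'y \<Rightarrow> ('x \<Rightarrow> 'y) \<Rightarrow> bool" where
  "alg_iso X Y mX uX mY uY f \<longleftrightarrow> salg X mX uX \<and> salg Y mY uY \<and> slin X Y f \<and>
     (\<forall>x x'. veq Y (f (mX x x')) (mY (f x) (f x'))) \<and> veq Y (f uX) uY \<and>
     (\<forall>x x'. veq Y (f x) (f x') \<longrightarrow> veq X x x') \<and> (\<forall>y. \<exists>x. veq Y (f x) y)"

end

theory Submission
  imports Defs
begin

section \<open>Sums over pair lists\<close>

definition SP :: "('a \<times> 'b) list \<Rightarrow> ('a \<Rightarrow> 'b \<Rightarrow> 'c::comm_monoid_add) \<Rightarrow> 'c" where
  "SP xs F = sum_list (map (\<lambda>(a,b). F a b) xs)"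

lemma SP_Nil[simp]: "SP [] F = 0" by (simp add: SP_def)
lemma SP_Cons[simp]: "SP ((a,b)#xs) F = F a b + SP xs F" by (simp add: SP_def)
lemma SP_append[simp]: "SP (xs@ys) F = SP xs F + SP ys F" by (simp add: SP_def)
lemma SP_concat_map[simp]: "SP (concat (map (\<lambda>(a,b). G a b) xs)) F = SP xs (\<lambda>a b. SP (G a b) F)"
  by (induction xs) auto
lemma SP_map[simp]: "SP (map (\<lambda>(a,b). (g a b, h a b)) xs) F = SP xs (\<lambda>a b. F (g a b) (h a b))"
  by (induction xs) auto

lemma SP_add[simp]: "SP xs (\<lambda>a b. F a b + G a b) = SP xs F + SP xs G"
  by (induction xs) (auto simp: algebra_simps)
lemma SP_zero[simp]: "SP xs (\<lambda>a b. 0) = 0"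
  by (induction xs) auto
lemma SP_cmult[simp]: "SP xs (\<lambda>a b. (c::'c::comm_semiring_0) * F a b) = c * SP xs F"
  by (induction xs) (auto simp: algebra_simps)
lemma SP_multc[simp]: "SP xs (\<lambda>a b. F a b * (c::'c::comm_semiring_0)) = SP xs F * c"
  by (induction xs) (auto simp: algebra_simps)

lemma SP_lin:
  assumes "\<And>x y. L (x+y) = L x + L y" "L 0 = 0"
  shows "L (SP xs F) = SP xs (\<lambda>a b. L (F a b))"
  by (induction xs) (auto simp: assms)

lemma SP_swap: "SP xs (\<lambda>a b. SP ys (\<lambda>c d. F a b c d)) = SP ys (\<lambda>c d. SP xs (\<lambda>a b. F a b c d))"
  by (induction xs) auto

lemma SP_cong: "(\<And>a b. (a,b) \<in> set xs \<Longrightarrow> F a b = G a b) \<Longrightarrow> SP xs F = SP xs G"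
  unfolding SP_def by (induction xs) auto

section \<open>Linearity predicates for plain spaces\<close>

definition lin1 :: "('k \<Rightarrow> 'x \<Rightarrow> 'x) \<Rightarrow> ('x::plus \<Rightarrow> 'k::{plus,times}) \<Rightarrow> bool" where
  "lin1 s g \<longleftrightarrow> (\<forall>x y. g (x+y) = g x + g y) \<and> (\<forall>c x. g (s c x) = c * g x)"

definition bil :: "('k \<Rightarrow> 'x \<Rightarrow> 'x) \<Rightarrow> ('k \<Rightarrow> 'y \<Rightarrow> 'y) \<Rightarrow> ('x::plus \<Rightarrow> 'y::plus \<Rightarrow> 'k::{plus,times}) \<Rightarrow> bool" where
  "bil s1 s2 G \<longleftrightarrow> (\<forall>y. lin1 s1 (\<lambda>x. G x y)) \<and> (\<forall>x. lin1 s2 (G x))"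

definition tril :: "('k \<Rightarrow> 'x \<Rightarrow> 'x) \<Rightarrow> ('k \<Rightarrow> 'y \<Rightarrow> 'y) \<Rightarrow> ('k \<Rightarrow> 'z \<Rightarrow> 'z) \<Rightarrow>
   ('x::plus \<Rightarrow> 'y::plus \<Rightarrow> 'z::plus \<Rightarrow> 'k::{plus,times}) \<Rightarrow> bool" where
  "tril s1 s2 s3 T \<longleftrightarrow> (\<forall>y z. lin1 s1 (\<lambda>x. T x y z)) \<and> (\<forall>x z. lin1 s2 (\<lambda>y. T x y z)) \<and> (\<forall>x y. lin1 s3 (T x y))"

definition quadl :: "('k \<Rightarrow> 'x \<Rightarrow> 'x) \<Rightarrow> ('k \<Rightarrow> 'y \<Rightarrow> 'y) \<Rightarrow> ('k \<Rightarrow> 'z \<Rightarrow> 'z) \<Rightarrow> ('k \<Rightarrow> 'w \<Rightarrow> 'w) \<Rightarrow>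
   ('x::plus \<Rightarrow> 'y::plus \<Rightarrow> 'z::plus \<Rightarrow> 'w::plus \<Rightarrow> 'k::{plus,times}) \<Rightarrow> bool" where
  "quadl s1 s2 s3 s4 Q \<longleftrightarrow> (\<forall>y z w. lin1 s1 (\<lambda>x. Q x y z w)) \<and> (\<forall>x z w. lin1 s2 (\<lambda>y. Q x y z w))
     \<and> (\<forall>x y w. lin1 s3 (\<lambda>z. Q x y z w)) \<and> (\<forall>x y z. lin1 s4 (Q x y z))"

lemmas lin_defs = lin1_def bil_def tril_def quadl_def

lemma lin1_zero:
  fixes g :: "'x::comm_monoid_add \<Rightarrow> 'k::comm_ring"
  assumes "lin1 s g" shows "g 0 = 0"
proof -
  have "g (0+0) = g 0 + g 0" using assms unfolding lin1_def by blast
  then show ?thesis by simp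
qed

lemma lin1_rules:
  fixes g :: "'x::comm_monoid_add \<Rightarrow> 'k::comm_ring"
  assumes "lin1 s g"
  shows "g (x+y) = g x + g y" "g (s c x) = c * g x" "g 0 = 0" "g (SP xs F) = SP xs (\<lambda>a b. g (F a b))"
  using assms lin1_zero[OF assms] by (auto simp: lin1_def intro!: SP_lin)

lemma bil_rules:
  fixes G :: "'x::comm_monoid_add \<Rightarrow> 'y::comm_monoid_add \<Rightarrow> 'k::comm_ring"
  assumes "bil s1 s2 G"
  shows "G (x+x') y = G x y + G x' y" "G (s1 c x) y = c * G x y" "G 0 y = 0"
    "G (SP xs F) y = SP xs (\<lambda>a b. G (F a b) y)"
    "G x (y+y') = G x y + G x y'" "G x (s2 c y) = c * G x y" "G x 0 = 0"
    "G x (SP ys F2) = SP ys (\<lambda>a b. G x (F2 a b))"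
proof -
  have 1: "lin1 s1 (\<lambda>x. G x y)" for y using assms by (simp add: bil_def)
  have 2: "lin1 s2 (G x)" for x using assms by (simp add: bil_def)
  show "G (x+x') y = G x y + G x' y" "G (s1 c x) y = c * G x y" "G 0 y = 0"
    "G (SP xs F) y = SP xs (\<lambda>a b. G (F a b) y)"
    using lin1_rules[OF 1[of y]] by auto
  show "G x (y+y') = G x y + G x y'" "G x (s2 c y) = c * G x y" "G x 0 = 0"
    "G x (SP ys F2) = SP ys (\<lambda>a b. G x (F2 a b))"
    using lin1_rules[OF 2[of x]] by auto
qed

lemma tril_rules:
  fixes T :: "'x::comm_monoid_add \<Rightarrow> 'y::comm_monoid_add \<Rightarrow> 'z::comm_monoid_add \<Rightarrow> 'k::comm_ring"
  assumes "tril s1 s2 s3 T"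
  shows "T (x+x') y z = T x y z + T x' y z" "T (s1 c x) y z = c * T x y z" "T 0 y z = 0"
    "T (SP xs F) y z = SP xs (\<lambda>a b. T (F a b) y z)"
    "T x (y+y') z = T x y z + T x y' z" "T x (s2 c y) z = c * T x y z" "T x 0 z = 0"
    "T x (SP ys F2) z = SP ys (\<lambda>a b. T x (F2 a b) z)"
    "T x y (z+z') = T x y z + T x y z'" "T x y (s3 c z) = c * T x y z" "T x y 0 = 0"
    "T x y (SP zs F3) = SP zs (\<lambda>a b. T x y (F3 a b))"
proof -
  have 1: "lin1 s1 (\<lambda>x. T x y z)" for y z using assms by (simp add: tril_def)
  have 2: "lin1 s2 (\<lambda>y. T x y z)" for x z using assms by (simp add: tril_def)
  have 3: "lin1 s3 (T x y)" for x y using assms by (simp add: tril_def)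
  show "T (x+x') y z = T x y z + T x' y z" "T (s1 c x) y z = c * T x y z" "T 0 y z = 0"
    "T (SP xs F) y z = SP xs (\<lambda>a b. T (F a b) y z)"
    using lin1_rules[OF 1[of y z]] by auto
  show "T x (y+y') z = T x y z + T x y' z" "T x (s2 c y) z = c * T x y z" "T x 0 z = 0"
    "T x (SP ys F2) z = SP ys (\<lambda>a b. T x (F2 a b) z)"
    using lin1_rules[OF 2[of x z]] by auto
  show "T x y (z+z') = T x y z + T x y z'" "T x y (s3 c z) = c * T x y z" "T x y 0 = 0"
    "T x y (SP zs F3) = SP zs (\<lambda>a b. T x y (F3 a b))"
    using lin1_rules[OF 3[of x y]] by auto
qed

lemma quadl_rules:
  fixes Q :: "'x::comm_monoid_add \<Rightarrow> 'y::comm_monoid_add \<Rightarrow> 'z::comm_monoid_add \<Rightarrow> 'w::comm_monoid_add \<Rightarrow> 'k::comm_ring"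
  assumes "quadl s1 s2 s3 s4 Q"
  shows "Q (x+x') y z w = Q x y z w + Q x' y z w" "Q (s1 c x) y z w = c * Q x y z w"
    "Q x (y+y') z w = Q x y z w + Q x y' z w" "Q x (s2 c y) z w = c * Q x y z w"
    "Q x y (z+z') w = Q x y z w + Q x y z' w" "Q x y (s3 c z) w = c * Q x y z w"
    "Q x y z (w+w') = Q x y z w + Q x y z w'" "Q x y z (s4 c w) = c * Q x y z w"
    "Q (SP xs F) y z w = SP xs (\<lambda>a b. Q (F a b) y z w)"
    "Q x (SP ys F2) z w = SP ys (\<lambda>a b. Q x (F2 a b) z w)"
    "Q x y (SP zs F3) w = SP zs (\<lambda>a b. Q x y (F3 a b) w)"
    "Q x y z (SP ws F4) = SP ws (\<lambda>a b. Q x y z (F4 a b))"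
proof -
  have 1: "lin1 s1 (\<lambda>x. Q x y z w)" for y z w using assms by (simp add: quadl_def)
  have 2: "lin1 s2 (\<lambda>y. Q x y z w)" for x z w using assms by (simp add: quadl_def)
  have 3: "lin1 s3 (\<lambda>z. Q x y z w)" for x y w using assms by (simp add: quadl_def)
  have 4: "lin1 s4 (Q x y z)" for x y z using assms by (simp add: quadl_def)
  show "Q (x+x') y z w = Q x y z w + Q x' y z w" "Q (s1 c x) y z w = c * Q x y z w"
    "Q (SP xs F) y z w = SP xs (\<lambda>a b. Q (F a b) y z w)"
    using lin1_rules[OF 1] by auto
  show "Q x (y+y') z w = Q x y z w + Q x y' z w" "Q x (s2 c y) z w = c * Q x y z w"
    "Q x (SP ys F2) z w = SP ys (\<lambda>a b. Q x (F2 a b) z w)"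
    using lin1_rules[OF 2] by auto
  show "Q x y (z+z') w = Q x y z w + Q x y z' w" "Q x y (s3 c z) w = c * Q x y z w"
    "Q x y (SP zs F3) w = SP zs (\<lambda>a b. Q x y (F3 a b) w)"
    using lin1_rules[OF 3] by auto
  show "Q x y z (w+w') = Q x y z w + Q x y z w'" "Q x y z (s4 c w) = c * Q x y z w"
    "Q x y z (SP ws F4) = SP ws (\<lambda>a b. Q x y z (F4 a b))"
    using lin1_rules[OF 4] by auto
qed

section \<open>Setoid tensor products\<close>

lemma tens_simps[simp]:
  "vadd (tens V W) = (@)" "vzero (tens V W) = []"
  "vsc (tens V W) c xs = map (\<lambda>(x,y). (vsc V c x, y)) xs"
  by (simp_all add: tens_def)

lemma veq_tens: "veq (tens V W) xs ys \<longleftrightarrow> (\<forall>f. bilin V W f \<longrightarrow> SP xs f = SP ys f)"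
  by (simp add: tens_def SP_def)

lemma plainvs_simps[simp]:
  "vadd (plainvs s) = (+)" "vzero (plainvs s) = 0" "vsc (plainvs s) = s" "veq (plainvs s) = (=)"
  by (simp_all add: plainvs_def)

lemma HV_simps[simp]:
  "vadd (HV H) = (+)" "vzero (HV H) = 0" "vsc (HV H) = hsc H" "veq (HV H) = (=)"
  by (simp_all add: HV_def)

lemma vsum_tens[simp]: "vsum (tens V W) xss = concat xss"
  by (induction xss) (auto simp: vsum_def)

lemma vsum_plain[simp]: "vsum (plainvs s) xs = sum_list xs"
  by (induction xs) (auto simp: vsum_def)

lemma vsum_HV[simp]: "vsum (HV H) xs = sum_list xs"
  by (induction xs) (auto simp: vsum_def)

lemma sum_list_SP: "sum_list (map (\<lambda>(a,b). F a b) xs) = SP xs F"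
  by (simp add: SP_def)

lemma lfun_plain: "lfun (plainvs s) g \<longleftrightarrow> lin1 s g"
  by (simp add: lfun_def lin1_def)

lemma lfun_HV: "lfun (HV H) g \<longleftrightarrow> lin1 (hsc H) g"
  by (simp add: lfun_def lin1_def)

lemma bilin_plain: "bilin (plainvs s1) (plainvs s2) G \<longleftrightarrow> bil s1 s2 G"
  by (simp add: bilin_def bil_def lfun_plain)

lemma bilin_HV: "bilin (HV H) (plainvs s2) G \<longleftrightarrow> bil (hsc H) s2 G"
  "bilin (plainvs s1) (HV H) G \<longleftrightarrow> bil s1 (hsc H) G"
  "bilin (HV H) (HV H) G' \<longleftrightarrow> bil (hsc H) (hsc H) G'"
  by (simp_all add: bilin_def bil_def lfun_plain lfun_HV)

lemma bilin_lfun1: "bilin V W f \<Longrightarrow> lfun V (\<lambda>x. f x y)" by (simp add: bilin_def)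
lemma bilin_lfun2: "bilin V W f \<Longrightarrow> lfun W (f x)" by (simp add: bilin_def)

lemma lfun_SP_tens:
  fixes F :: "'x \<Rightarrow> 'y \<Rightarrow> 'k::field"
  assumes "bilin V W F"
  shows "lfun (tens V W) (\<lambda>zs. SP zs F)"
proof -
  have "SP (map (\<lambda>(x, y). (vsc V c x, y)) xs) F = c * SP xs F" for c xs
  proof (induction xs)
    case (Cons p xs) then show ?case
      using bilin_lfun1[OF assms] by (cases p) (auto simp: lfun_def algebra_simps)
  qed simp
  then show ?thesis using assms by (auto simp: lfun_def veq_tens)
qed

lemma lfun_tens_decomp:
  fixes g :: "('x \<times> 'y) list \<Rightarrow> 'k::field"
  assumes "lfun (tens V W) g"
  shows "g zs = SP zs (\<lambda>v w. g [(v,w)])"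
proof -
  have a: "g (xs @ ys) = g xs + g ys" for xs ys using assms by (auto simp: lfun_def)
  have z0: "g [] = g [] + g []" using a[of "[]" "[]"] by (metis append_Nil)
  have z: "g [] = 0" using z0 by (metis add_cancel_right_right)
  show ?thesis
  proof (induction zs)
    case Nil then show ?case by (simp add: z)
  next
    case (Cons p zs) then show ?case using a[of "[p]" zs] by (cases p) auto
  qed
qed

lemma lfun_tens_bilin:
  fixes g :: "('x \<times> 'y) list \<Rightarrow> 'k::field"
  assumes "lfun (tens V W) g"
  shows "bilin V W (\<lambda>v w. g [(v,w)])"
proof -
  have a: "g (xs @ ys) = g xs + g ys" for xs ys using assms by (auto simp: lfun_def)
  have s: "g (map (\<lambda>(x,y). (vsc V c x, y)) xs) = c * g xs" for c xs
    using assms by (auto simp: lfun_def)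
  have e: "veq (tens V W) xs ys \<Longrightarrow> g xs = g ys" for xs ys using assms by (auto simp: lfun_def)
  show ?thesis unfolding bilin_def lfun_def
  proof (intro conjI allI impI)
    fix y x x'
    have "veq (tens V W) [(vadd V x x', y)] [(x,y),(x',y)]"
      by (auto simp: veq_tens bilin_def lfun_def)
    then show "g [(vadd V x x', y)] = g [(x, y)] + g [(x', y)]" using e a[of "[(x,y)]" "[(x',y)]"] by auto
  next
    fix y c x show "g [(vsc V c x, y)] = c * g [(x, y)]" using s[of c "[(x,y)]"] by simp
  next
    fix y x x' assume "veq V x x'"
    then have "veq (tens V W) [(x, y)] [(x',y)]"
      by (auto simp: veq_tens bilin_def lfun_def)
    then show "g [(x, y)] = g [(x', y)]" using e by auto
  next
    fix x y y'
    have "veq (tens V W) [(x, vadd W y y')] [(x,y),(x,y')]"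
      by (auto simp: veq_tens bilin_def lfun_def)
    then show "g [(x, vadd W y y')] = g [(x, y)] + g [(x, y')]" using e a[of "[(x,y)]" "[(x,y')]"] by auto
  next
    fix x c y
    have "veq (tens V W) [(x, vsc W c y)] [(vsc V c x,y)]"
      by (auto simp: veq_tens bilin_def lfun_def)
    then show "g [(x, vsc W c y)] = c * g [(x, y)]" using e s[of c "[(x,y)]"] by auto
  next
    fix x y y' assume "veq W y y'"
    then have "veq (tens V W) [(x, y)] [(x,y')]"
      by (auto simp: veq_tens bilin_def lfun_def)
    then show "g [(x, y)] = g [(x, y')]" using e by auto
  qed
qed

lemma SP_vsc:
  fixes f :: "'x \<Rightarrow> 'y \<Rightarrow> 'k::field"
  assumes "bilin V W f"
  shows "SP xs (\<lambda>a b. f (vsc V c a) b) = c * SP xs f"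
  using lfun_SP_tens[OF assms] by (simp add: lfun_def)

lemma svs_tens:
  fixes V :: "('k::field,'x) svsp"
  shows "svs (tens V W)"
proof -
  have m: "SP xs (\<lambda>a b. f (vsc V c a) b) = c * SP xs f" if "bilin V W f" for c xs f
    using SP_vsc[OF that] .
  have mm: "SP (map (\<lambda>(x, y). (vsc V c x, y)) xs) f = c * SP xs f" if "bilin V W f" for c xs f
    using SP_vsc[OF that] by simp
  have m2: "SP xs (\<lambda>a b. f (vsc V c (vsc V d a)) b) = c * (d * SP xs f)" if "bilin V W f" for c d xs f
  proof (induction xs)
    case (Cons p xs) then show ?case
      using bilin_lfun1[OF that] by (cases p) (auto simp: lfun_def algebra_simps)
  qed simp
  show ?thesis unfolding svs_def
  proof (intro conjI allI impI)
    show "equivp (veq (tens V W))" by (auto simp: veq_tens equivp_def fun_eq_iff)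
  qed (auto simp: veq_tens m mm m2 algebra_simps simp del: map_map)
qed

lemma HV_plain: "HV H = plainvs (hsc H)" by (simp add: HV_def)

lemma SP_sc1:
  fixes G :: "'x::comm_monoid_add \<Rightarrow> 'y::comm_monoid_add \<Rightarrow> 'k::comm_ring"
  assumes "bil s1 s2 G" shows "SP xs (\<lambda>a b. G (s1 c a) b) = c * SP xs G"
  by (induction xs) (auto simp: bil_rules[OF assms] algebra_simps)

lemma veq2_use:
  fixes F :: "'x::ab_group_add \<Rightarrow> 'y::ab_group_add \<Rightarrow> 'k::field"
  assumes "veq (tens (plainvs s1) (plainvs s2)) xs ys" "bil s1 s2 F"
  shows "SP xs F = SP ys F"
  using assms by (simp add: veq_tens bilin_plain)

lemma veq2_goal:
  fixes xs :: "('x::ab_group_add \<times> 'y::ab_group_add) list"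
  assumes "\<And>F::'x \<Rightarrow> 'y \<Rightarrow> 'k::field. bil s1 s2 F \<Longrightarrow> SP xs F = SP ys F"
  shows "veq (tens (plainvs s1) (plainvs s2)) xs ys"
  using assms by (simp add: veq_tens bilin_plain)

lemma lfun_SP_gen:
  fixes T :: "'v \<Rightarrow> 'w \<Rightarrow> 'x \<Rightarrow> 'k::field"
  assumes "\<forall>w x. lfun V (\<lambda>v. T v w x)"
  shows "lfun V (\<lambda>v. SP zs (T v))"
proof -
  have "SP zs (T (vadd V v v')) = SP zs (T v) + SP zs (T v')" for v v'
    using assms by (induction zs) (auto simp: lfun_def algebra_simps)
  moreover have "SP zs (T (vsc V c v)) = c * SP zs (T v)" for c v
    using assms by (induction zs) (auto simp: lfun_def algebra_simps)
  moreover have "veq V v v' \<Longrightarrow> SP zs (T v) = SP zs (T v')" for v v'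
    using assms by (induction zs) (auto simp: lfun_def algebra_simps)
  ultimately show ?thesis by (auto simp: lfun_def)
qed

lemma veqR_use:
  fixes T :: "'v \<Rightarrow> 'w \<Rightarrow> 'x \<Rightarrow> 'k::field"
  assumes "veq (tens V (tens W X)) xs ys" "\<forall>v. bilin W X (T v)" "\<forall>w x. lfun V (\<lambda>v. T v w x)"
  shows "SP xs (\<lambda>v zs. SP zs (T v)) = SP ys (\<lambda>v zs. SP zs (T v))"
proof -
  have "bilin V (tens W X) (\<lambda>v zs. SP zs (T v))"
    unfolding bilin_def using lfun_SP_gen[OF assms(3)] lfun_SP_tens assms(2) by blast
  then show ?thesis using assms(1) by (simp add: veq_tens)
qed

lemma veqR_goal:
  fixes xs :: "('v \<times> ('w \<times> 'x) list) list"
  assumes "\<And>T::'v \<Rightarrow> 'w \<Rightarrow> 'x \<Rightarrow> 'k::field. \<forall>v. bilin W X (T v) \<Longrightarrow> \<forall>w x. lfun V (\<lambda>v. T v w x) \<Longrightarrow>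
     SP xs (\<lambda>v zs. SP zs (T v)) = SP ys (\<lambda>v zs. SP zs (T v))"
  shows "veq (tens V (tens W X)) xs ys"
  unfolding veq_tens
proof (intro allI impI)
  fix f :: "'v \<Rightarrow> ('w \<times> 'x) list \<Rightarrow> 'k" assume f: "bilin V (tens W X) f"
  define T where "T v w x = f v [(w,x)]" for v w x
  have 1: "\<forall>v. bilin W X (T v)" unfolding T_def using lfun_tens_bilin bilin_lfun2[OF f] by blast
  have 2: "\<forall>w x. lfun V (\<lambda>v. T v w x)" unfolding T_def using bilin_lfun1[OF f] by blast
  have e: "f v zs = SP zs (T v)" for v zs
    unfolding T_def using lfun_tens_decomp[OF bilin_lfun2[OF f]] by blast
  show "SP xs f = SP ys f" using assms[OF 1 2] by (simp add: e[abs_def])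
qed

lemma veqL_use:
  fixes T :: "'v \<Rightarrow> 'w \<Rightarrow> 'x \<Rightarrow> 'k::field"
  assumes "veq (tens (tens V W) X) xs ys" "\<forall>x. bilin V W (\<lambda>v w. T v w x)" "\<forall>v w. lfun X (T v w)"
  shows "SP xs (\<lambda>zs x. SP zs (\<lambda>v w. T v w x)) = SP ys (\<lambda>zs x. SP zs (\<lambda>v w. T v w x))"
proof -
  have l1: "lfun (tens V W) (\<lambda>zs. SP zs (\<lambda>v w. T v w x))" for x
    using lfun_SP_tens assms(2) by blast
  have "SP zs (\<lambda>v w. T v w (vadd X x x')) = SP zs (\<lambda>v w. T v w x) + SP zs (\<lambda>v w. T v w x')" for zs x x'
    using assms(3) by (induction zs) (auto simp: lfun_def algebra_simps)
  moreover have "SP zs (\<lambda>v w. T v w (vsc X c x)) = c * SP zs (\<lambda>v w. T v w x)" for zs c x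
    using assms(3) by (induction zs) (auto simp: lfun_def algebra_simps)
  moreover have "veq X x x' \<Longrightarrow> SP zs (\<lambda>v w. T v w x) = SP zs (\<lambda>v w. T v w x')" for zs x x'
    using assms(3) by (induction zs) (auto simp: lfun_def algebra_simps)
  ultimately have l2: "lfun X (\<lambda>x. SP zs (\<lambda>v w. T v w x))" for zs by (auto simp: lfun_def)
  have "bilin (tens V W) X (\<lambda>zs x. SP zs (\<lambda>v w. T v w x))"
    unfolding bilin_def using l1 l2 by blast
  then show ?thesis using assms(1) by (simp add: veq_tens)
qed

lemma veqL_goal:
  fixes xs :: "(('v \<times> 'w) list \<times> 'x) list"
  assumes "\<And>T::'v \<Rightarrow> 'w \<Rightarrow> 'x \<Rightarrow> 'k::field. \<forall>x. bilin V W (\<lambda>v w. T v w x) \<Longrightarrow> \<forall>v w. lfun X (T v w) \<Longrightarrow>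
     SP xs (\<lambda>zs x. SP zs (\<lambda>v w. T v w x)) = SP ys (\<lambda>zs x. SP zs (\<lambda>v w. T v w x))"
  shows "veq (tens (tens V W) X) xs ys"
  unfolding veq_tens
proof (intro allI impI)
  fix f :: "('v \<times> 'w) list \<Rightarrow> 'x \<Rightarrow> 'k" assume f: "bilin (tens V W) X f"
  define T where "T v w x = f [(v,w)] x" for v w x
  have 1: "\<forall>x. bilin V W (\<lambda>v w. T v w x)" unfolding T_def using lfun_tens_bilin bilin_lfun1[OF f] by blast
  have 2: "\<forall>v w. lfun X (T v w)" unfolding T_def using bilin_lfun2[OF f] by blast
  have e: "f zs x = SP zs (\<lambda>v w. T v w x)" for x zs
    unfolding T_def using lfun_tens_decomp[OF bilin_lfun1[OF f]] by blast
  show "SP xs f = SP ys f" using assms[OF 1 2] by (simp add: e[abs_def])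
qed

lemma veqR3_use:
  fixes T :: "'v::ab_group_add \<Rightarrow> 'w::ab_group_add \<Rightarrow> 'x::ab_group_add \<Rightarrow> 'k::field"
  assumes "veq (tens (plainvs s1) (tens (plainvs s2) (plainvs s3))) xs ys" "tril s1 s2 s3 T"
  shows "SP xs (\<lambda>v zs. SP zs (T v)) = SP ys (\<lambda>v zs. SP zs (T v))"
  using assms(2) by (intro veqR_use[OF assms(1)]) (auto simp: bilin_plain lfun_plain tril_def bil_def)

lemma veqL3_use:
  fixes T :: "'v::ab_group_add \<Rightarrow> 'w::ab_group_add \<Rightarrow> 'x::ab_group_add \<Rightarrow> 'k::field"
  assumes "veq (tens (tens (plainvs s1) (plainvs s2)) (plainvs s3)) xs ys" "tril s1 s2 s3 T"
  shows "SP xs (\<lambda>zs x. SP zs (\<lambda>v w. T v w x)) = SP ys (\<lambda>zs x. SP zs (\<lambda>v w. T v w x))"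
  using assms(2) by (intro veqL_use[OF assms(1)]) (auto simp: bilin_plain lfun_plain tril_def bil_def)

lemma veqR3_goal:
  fixes xs :: "('v::ab_group_add \<times> ('w::ab_group_add \<times> 'x::ab_group_add) list) list"
  assumes "\<And>T::'v \<Rightarrow> 'w \<Rightarrow> 'x \<Rightarrow> 'k::field. tril s1 s2 s3 T \<Longrightarrow>
     SP xs (\<lambda>v zs. SP zs (T v)) = SP ys (\<lambda>v zs. SP zs (T v))"
  shows "veq (tens (plainvs s1) (tens (plainvs s2) (plainvs s3))) xs ys"
  by (rule veqR_goal, rule assms) (auto simp: bilin_plain lfun_plain tril_def bil_def)

lemma veqL3_goal:
  fixes xs :: "(('v::ab_group_add \<times> 'w::ab_group_add) list \<times> 'x::ab_group_add) list"
  assumes "\<And>T::'v \<Rightarrow> 'w \<Rightarrow> 'x \<Rightarrow> 'k::field. tril s1 s2 s3 T \<Longrightarrow>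
     SP xs (\<lambda>zs x. SP zs (\<lambda>v w. T v w x)) = SP ys (\<lambda>zs x. SP zs (\<lambda>v w. T v w x))"
  shows "veq (tens (tens (plainvs s1) (plainvs s2)) (plainvs s3)) xs ys"
  by (rule veqL_goal, rule assms) (auto simp: bilin_plain lfun_plain tril_def bil_def)

lemma vs_rules:
  assumes "vector_space s"
  shows "s c (x+y) = s c x + s c y" "s (c+d) x = s c x + s d x" "s c (s d x) = s (c*d) x"
    "s 1 x = x" "s 0 x = 0" "s c 0 = 0"
proof -
  have m: "module s" using assms by (simp add: module_iff_vector_space)
  show "s c (x+y) = s c x + s c y" "s (c+d) x = s c x + s d x" "s c (s d x) = s (c*d) x" "s 1 x = x"
    using assms by (simp_all add: vector_space_def)
  show "s 0 x = 0" "s c 0 = 0" using module.scale_zero_left[OF m] module.scale_zero_right[OF m] by auto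
qed

lemma add_hom_zero:
  fixes L :: "'a::ab_group_add \<Rightarrow> 'b::ab_group_add"
  assumes "\<And>x y. L (x+y) = L x + L y" shows "L 0 = 0"
proof -
  have "L (0+0) = L 0 + L 0" by (rule assms)
  then show ?thesis by simp
qed

lemma slin_co_rules:
  fixes co :: "'x::ab_group_add \<Rightarrow> ('a::ab_group_add \<times> 'b::ab_group_add) list" and G :: "'a \<Rightarrow> 'b \<Rightarrow> 'k::field"
  assumes vs: "vector_space s" and sl: "slin (plainvs s) (tens (plainvs s1) (plainvs s2)) co" and G: "bil s1 s2 G"
  shows "SP (co (x+y)) G = SP (co x) G + SP (co y) G" "SP (co (s c x)) G = c * SP (co x) G"
    "SP (co 0) G = 0" "SP (co (SP xs F)) G = SP xs (\<lambda>a b. SP (co (F a b)) G)"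
proof -
  show a: "SP (co (x+y)) G = SP (co x) G + SP (co y) G" for x y
  proof -
    have "veq (tens (plainvs s1) (plainvs s2)) (co (x + y)) (co x @ co y)" using sl by (simp add: slin_def)
    from veq2_use[OF this G] show ?thesis by simp
  qed
  show c: "SP (co (s c x)) G = c * SP (co x) G" for c x
  proof -
    have "veq (tens (plainvs s1) (plainvs s2)) (co (s c x)) (map (\<lambda>(a, b). (s1 c a, b)) (co x))"
      using sl by (simp add: slin_def)
    from veq2_use[OF this G] have "SP (co (s c x)) G = SP (map (\<lambda>(a, b). (s1 c a, b)) (co x)) G" .
    also have "\<dots> = c * SP (co x) G" using SP_sc1[OF G] by simp
    finally show ?thesis .
  qed
  show z: "SP (co 0) G = 0" using c[of 0 0] vs_rules[OF vs] by simp
  show "SP (co (SP xs F)) G = SP xs (\<lambda>a b. SP (co (F a b)) G)"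
    by (induction xs) (auto simp: z a)
qed

section \<open>Bialgebra\<close>

locale bia =
  fixes H :: "('k::field, 'h::ab_group_add) bialg"
  assumes bialg: "bialgebra H"
begin

lemma vsH: "vector_space (hsc H)" using bialg by (simp add: bialgebra_def)

lemma hsc_simps[simp]:
  "hsc H c (x+y) = hsc H c x + hsc H c y" "hsc H (c+d) x = hsc H c x + hsc H d x"
  "hsc H c (hsc H d x) = hsc H (c*d) x" "hsc H 1 x = x" "hsc H 0 x = 0" "hsc H c 0 = 0"
  using vs_rules[OF vsH] by auto

lemma hsc_SP[simp]: "hsc H c (SP xs F) = SP xs (\<lambda>a b. hsc H c (F a b))"
  by (rule SP_lin) auto

lemma salgH: "salg (plainvs (hsc H)) (hmul H) (hone H)"
  using bialg by (simp add: bialgebra_def HV_plain)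

lemma hmul_simps1[simp]:
  "hmul H (x+y) z = hmul H x z + hmul H y z" "hmul H x (y+z) = hmul H x y + hmul H x z"
  "hmul H (hsc H c x) y = hsc H c (hmul H x y)" "hmul H x (hsc H c y) = hsc H c (hmul H x y)"
  "hmul H (hmul H x y) z = hmul H x (hmul H y z)" "hmul H (hone H) x = x" "hmul H x (hone H) = x"
  using salgH by (auto simp: salg_def)

lemma hmul_simps2[simp]:
  "hmul H 0 x = 0" "hmul H x 0 = 0"
  "hmul H (SP xs F) y = SP xs (\<lambda>a b. hmul H (F a b) y)"
  "hmul H y (SP xs F) = SP xs (\<lambda>a b. hmul H y (F a b))"
  by (auto intro!: add_hom_zero SP_lin)

lemma hcou_lin: "lin1 (hsc H) (hcou H)"
  using bialg by (simp add: bialgebra_def lfun_HV)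

lemma hcou_simps[simp]:
  "hcou H (x+y) = hcou H x + hcou H y" "hcou H (hsc H c x) = c * hcou H x" "hcou H 0 = 0"
  "hcou H (SP xs F) = SP xs (\<lambda>a b. hcou H (F a b))"
  "hcou H (hmul H x y) = hcou H x * hcou H y" "hcou H (hone H) = 1"
  using lin1_rules[OF hcou_lin] bialg by (auto simp: bialgebra_def)

lemma hcom_slin: "slin (plainvs (hsc H)) (tens (plainvs (hsc H)) (plainvs (hsc H))) (hcom H)"
  using bialg by (simp add: bialgebra_def HV_plain)

lemma hcom_lin:
  fixes G :: "'h \<Rightarrow> 'h \<Rightarrow> 'k"
  assumes "bil (hsc H) (hsc H) G"
  shows "SP (hcom H (x+y)) G = SP (hcom H x) G + SP (hcom H y) G"
    "SP (hcom H (hsc H c x)) G = c * SP (hcom H x) G"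
    "SP (hcom H 0) G = 0" "SP (hcom H (SP xs F)) G = SP xs (\<lambda>a b. SP (hcom H (F a b)) G)"
  using slin_co_rules[OF vsH hcom_slin assms] by auto

lemma hcom_mul:
  fixes G :: "'h \<Rightarrow> 'h \<Rightarrow> 'k"
  assumes "bil (hsc H) (hsc H) G"
  shows "SP (hcom H (hmul H h g)) G = SP (hcom H h) (\<lambda>x1 x2. SP (hcom H g) (\<lambda>y1 y2. G (hmul H x1 y1) (hmul H x2 y2)))"
proof -
  have "veq (tens (plainvs (hsc H)) (plainvs (hsc H))) (hcom H (hmul H h g))
        [(hmul H x1 y1, hmul H x2 y2). (x1, x2) \<leftarrow> hcom H h, (y1, y2) \<leftarrow> hcom H g]"
    using bialg by (simp add: bialgebra_def HV_plain)
  from veq2_use[OF this assms] show ?thesis by simp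
qed

lemma hcom_one:
  fixes G :: "'h \<Rightarrow> 'h \<Rightarrow> 'k"
  assumes "bil (hsc H) (hsc H) G"
  shows "SP (hcom H (hone H)) G = G (hone H) (hone H)"
proof -
  have "veq (tens (plainvs (hsc H)) (plainvs (hsc H))) (hcom H (hone H)) [(hone H, hone H)]"
    using bialg by (simp add: bialgebra_def HV_plain)
  from veq2_use[OF this assms] show ?thesis by simp
qed

lemma hcom_coassoc:
  fixes T :: "'h \<Rightarrow> 'h \<Rightarrow> 'h \<Rightarrow> 'k"
  assumes "tril (hsc H) (hsc H) (hsc H) T"
  shows "SP (hcom H h) (\<lambda>x y. SP (hcom H x) (\<lambda>x1 x2. T x1 x2 y)) = SP (hcom H h) (\<lambda>x y. SP (hcom H y) (T x))"
proof -
  have "veq (tens (plainvs (hsc H)) (tens (plainvs (hsc H)) (plainvs (hsc H))))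
        [(x1, [(x2, y)]). (x, y) \<leftarrow> hcom H h, (x1, x2) \<leftarrow> hcom H x]
        [(x, hcom H y). (x, y) \<leftarrow> hcom H h]"
    using bialg by (simp add: bialgebra_def HV_plain)
  from veqR3_use[OF this assms] show ?thesis by simp
qed

lemma hcom_counitL:
  fixes F :: "'h \<Rightarrow> 'k"
  assumes "lin1 (hsc H) F"
  shows "SP (hcom H h) (\<lambda>x y. hcou H x * F y) = F h"
proof -
  have "SP (hcom H h) (\<lambda>x y. hsc H (hcou H x) y) = h"
    using bialg by (simp add: bialgebra_def sum_list_SP)
  then have "F h = F (SP (hcom H h) (\<lambda>x y. hsc H (hcou H x) y))" by simp
  also have "\<dots> = SP (hcom H h) (\<lambda>x y. hcou H x * F y)" by (simp add: lin1_rules[OF assms])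
  finally show ?thesis by simp
qed

lemma hcom_counitR:
  fixes F :: "'h \<Rightarrow> 'k"
  assumes "lin1 (hsc H) F"
  shows "SP (hcom H h) (\<lambda>x y. hcou H y * F x) = F h"
proof -
  have "SP (hcom H h) (\<lambda>x y. hsc H (hcou H y) x) = h"
    using bialg by (simp add: bialgebra_def sum_list_SP)
  then have "F h = F (SP (hcom H h) (\<lambda>x y. hsc H (hcou H y) x))" by simp
  also have "\<dots> = SP (hcom H h) (\<lambda>x y. hcou H y * F x)" by (simp add: lin1_rules[OF assms])
  finally show ?thesis by simp
qed

end

locale palg =
  fixes s :: "'k::field \<Rightarrow> 'm::ab_group_add \<Rightarrow> 'm" and m :: "'m \<Rightarrow> 'm \<Rightarrow> 'm" and u :: 'm
  assumes vs: "vector_space s" and sa: "salg (plainvs s) m u"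
begin

lemma s_simps[simp]:
  "s c (x+y) = s c x + s c y" "s (c+d) x = s c x + s d x"
  "s c (s d x) = s (c*d) x" "s 1 x = x" "s 0 x = 0" "s c 0 = 0"
  using vs_rules[OF vs] by auto

lemma s_SP[simp]: "s c (SP xs F) = SP xs (\<lambda>a b. s c (F a b))"
  by (rule SP_lin) auto

lemma m_simps1[simp]:
  "m (x+y) z = m x z + m y z" "m x (y+z) = m x y + m x z"
  "m (s c x) y = s c (m x y)" "m x (s c y) = s c (m x y)"
  "m (m x y) z = m x (m y z)" "m u x = x" "m x u = x"
  using sa by (auto simp: salg_def)

lemma m_simps2[simp]:
  "m 0 x = 0" "m x 0 = 0"
  "m (SP xs F) y = SP xs (\<lambda>a b. m (F a b) y)"
  "m y (SP xs F) = SP xs (\<lambda>a b. m y (F a b))"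
  by (auto intro!: add_hom_zero SP_lin)

end

locale lmod = bia H + palg s m u
  for H :: "('k::field, 'h::ab_group_add) bialg" and s :: "'k \<Rightarrow> 'm::ab_group_add \<Rightarrow> 'm" and m u +
  fixes la :: "'h \<Rightarrow> 'm \<Rightarrow> 'm"
  assumes lm: "lmodalg H (plainvs s) m u la"
begin

lemma la_simps1[simp]:
  "la h (x+y) = la h x + la h y" "la h (s c x) = s c (la h x)"
  "la (h+g) x = la h x + la g x" "la (hsc H c h) x = s c (la h x)"
  "la (hmul H h g) x = la h (la g x)" "la (hone H) x = x"
  "la h (m x y) = SP (hcom H h) (\<lambda>h1 h2. m (la h1 x) (la h2 y))"
  "la h u = s (hcou H h) u"
  using lm by (auto simp: lmodalg_def slin_def HV_plain sum_list_SP)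

lemma la_simps2[simp]:
  "la h 0 = 0" "la 0 x = 0"
  "la h (SP xs F) = SP xs (\<lambda>a b. la h (F a b))"
  "la (SP ys F2) x = SP ys (\<lambda>a b. la (F2 a b) x)"
  by (auto intro!: add_hom_zero SP_lin)

end

locale rmod = bia H + palg s m u
  for H :: "('k::field, 'h::ab_group_add) bialg" and s :: "'k \<Rightarrow> 'm::ab_group_add \<Rightarrow> 'm" and m u +
  fixes ra :: "'m \<Rightarrow> 'h \<Rightarrow> 'm"
  assumes rm: "rmodalg H (plainvs s) m u ra"
begin

lemma ra_simps1[simp]:
  "ra (x+y) h = ra x h + ra y h" "ra (s c x) h = s c (ra x h)"
  "ra x (h+g) = ra x h + ra x g" "ra x (hsc H c h) = s c (ra x h)"
  "ra x (hmul H h g) = ra (ra x h) g" "ra x (hone H) = x"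
  "ra (m x y) h = SP (hcom H h) (\<lambda>h1 h2. m (ra x h1) (ra y h2))"
  "ra u h = s (hcou H h) u"
  using rm by (auto simp: rmodalg_def slin_def HV_plain sum_list_SP)

lemma ra_simps2[simp]:
  "ra 0 h = 0" "ra x 0 = 0"
  "ra (SP xs F) h = SP xs (\<lambda>a b. ra (F a b) h)"
  "ra x (SP ys F2) = SP ys (\<lambda>a b. ra x (F2 a b))"
  by (auto intro!: add_hom_zero SP_lin)

end

locale bimod = lmod H s m u la + rmod H s m u ra
  for H :: "('k::field, 'h::ab_group_add) bialg" and s :: "'k \<Rightarrow> 'm::ab_group_add \<Rightarrow> 'm" and m u la ra +
  assumes compat: "\<And>h x g. la h (ra x g) = ra (la h x) g"
begin
declare compat[simp]
end

lemma bimodI: "bialgebra H \<Longrightarrow> vector_space s \<Longrightarrow> bimodalg H (plainvs s) m u la ra \<Longrightarrow> bimod H s m u la ra"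
  unfolding bimod_def lmod_def rmod_def bimod_axioms_def bia_def palg_def lmod_axioms_def rmod_axioms_def
  by (auto simp: bimodalg_def lmodalg_def)

locale lcomod = bia H + palg s m u
  for H :: "('k::field, 'h::ab_group_add) bialg" and s :: "'k \<Rightarrow> 'm::ab_group_add \<Rightarrow> 'm" and m u +
  fixes co :: "'m \<Rightarrow> ('h \<times> 'm) list"
  assumes lc: "lcomodalg H (plainvs s) m u co"
begin

lemma co_slin: "slin (plainvs s) (tens (plainvs (hsc H)) (plainvs s)) co"
  using lc by (simp add: lcomodalg_def HV_plain)

lemma co_lin:
  fixes G :: "'h \<Rightarrow> 'm \<Rightarrow> 'k"
  assumes "bil (hsc H) s G"
  shows "SP (co (x+y)) G = SP (co x) G + SP (co y) G"
    "SP (co (s c x)) G = c * SP (co x) G"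
    "SP (co 0) G = 0" "SP (co (SP xs F)) G = SP xs (\<lambda>a b. SP (co (F a b)) G)"
  using slin_co_rules[OF vs co_slin assms] by auto

lemma co_mul:
  fixes G :: "'h \<Rightarrow> 'm \<Rightarrow> 'k"
  assumes "bil (hsc H) s G"
  shows "SP (co (m x y)) G = SP (co x) (\<lambda>h x'. SP (co y) (\<lambda>g y'. G (hmul H h g) (m x' y')))"
proof -
  have "veq (tens (plainvs (hsc H)) (plainvs s)) (co (m x y))
        [(hmul H h g, m x' y'). (h, x') \<leftarrow> co x, (g, y') \<leftarrow> co y]"
    using lc by (simp add: lcomodalg_def HV_plain)
  from veq2_use[OF this assms] show ?thesis by simp
qed

lemma co_unit:
  fixes G :: "'h \<Rightarrow> 'm \<Rightarrow> 'k"
  assumes "bil (hsc H) s G"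
  shows "SP (co u) G = G (hone H) u"
proof -
  have "veq (tens (plainvs (hsc H)) (plainvs s)) (co u) [(hone H, u)]"
    using lc by (simp add: lcomodalg_def HV_plain)
  from veq2_use[OF this assms] show ?thesis by simp
qed

lemma co_coassoc:
  fixes T :: "'h \<Rightarrow> 'h \<Rightarrow> 'm \<Rightarrow> 'k"
  assumes "tril (hsc H) (hsc H) s T"
  shows "SP (co x) (\<lambda>h y. SP (hcom H h) (\<lambda>h1 h2. T h1 h2 y)) = SP (co x) (\<lambda>h y. SP (co y) (T h))"
proof -
  have "veq (tens (plainvs (hsc H)) (tens (plainvs (hsc H)) (plainvs s)))
        [(h1, [(h2, y)]). (h, y) \<leftarrow> co x, (h1, h2) \<leftarrow> hcom H h]
        [(h, co y). (h, y) \<leftarrow> co x]"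
    using lc by (simp add: lcomodalg_def HV_plain)
  from veqR3_use[OF this assms] show ?thesis by simp
qed

lemma co_counit:
  fixes F :: "'m \<Rightarrow> 'k"
  assumes "lin1 s F"
  shows "SP (co x) (\<lambda>h y. hcou H h * F y) = F x"
proof -
  have "SP (co x) (\<lambda>h y. s (hcou H h) y) = x"
    using lc by (simp add: lcomodalg_def sum_list_SP)
  then have "F x = F (SP (co x) (\<lambda>h y. s (hcou H h) y))" by simp
  also have "\<dots> = SP (co x) (\<lambda>h y. hcou H h * F y)" by (simp add: lin1_rules[OF assms])
  finally show ?thesis by simp
qed

end

locale rcomod = bia H + palg s m u
  for H :: "('k::field, 'h::ab_group_add) bialg" and s :: "'k \<Rightarrow> 'm::ab_group_add \<Rightarrow> 'm" and m u +
  fixes rho :: "'m \<Rightarrow> ('m \<times> 'h) list"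
  assumes rc: "rcomodalg H (plainvs s) m u rho"
begin

lemma rho_slin: "slin (plainvs s) (tens (plainvs s) (plainvs (hsc H))) rho"
  using rc by (simp add: rcomodalg_def HV_plain)

lemma rho_lin:
  fixes G :: "'m \<Rightarrow> 'h \<Rightarrow> 'k"
  assumes "bil s (hsc H) G"
  shows "SP (rho (x+y)) G = SP (rho x) G + SP (rho y) G"
    "SP (rho (s c x)) G = c * SP (rho x) G"
    "SP (rho 0) G = 0" "SP (rho (SP xs F)) G = SP xs (\<lambda>a b. SP (rho (F a b)) G)"
  using slin_co_rules[OF vs rho_slin assms] by auto

lemma rho_mul:
  fixes G :: "'m \<Rightarrow> 'h \<Rightarrow> 'k"
  assumes "bil s (hsc H) G"
  shows "SP (rho (m x y)) G = SP (rho x) (\<lambda>x' h. SP (rho y) (\<lambda>y' g. G (m x' y') (hmul H h g)))"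
proof -
  have "veq (tens (plainvs s) (plainvs (hsc H))) (rho (m x y))
        [(m x' y', hmul H h g). (x', h) \<leftarrow> rho x, (y', g) \<leftarrow> rho y]"
    using rc by (simp add: rcomodalg_def HV_plain)
  from veq2_use[OF this assms] show ?thesis by simp
qed

lemma rho_unit:
  fixes G :: "'m \<Rightarrow> 'h \<Rightarrow> 'k"
  assumes "bil s (hsc H) G"
  shows "SP (rho u) G = G u (hone H)"
proof -
  have "veq (tens (plainvs s) (plainvs (hsc H))) (rho u) [(u, hone H)]"
    using rc by (simp add: rcomodalg_def HV_plain)
  from veq2_use[OF this assms] show ?thesis by simp
qed

lemma rho_coassoc:
  fixes T :: "'m \<Rightarrow> 'h \<Rightarrow> 'h \<Rightarrow> 'k"
  assumes "tril s (hsc H) (hsc H) T"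
  shows "SP (rho x) (\<lambda>y h. SP (hcom H h) (T y)) = SP (rho x) (\<lambda>y h. SP (rho y) (\<lambda>y0 y1. T y0 y1 h))"
proof -
  have "veq (tens (plainvs s) (tens (plainvs (hsc H)) (plainvs (hsc H))))
        [(y0, [(y1, h)]). (y, h) \<leftarrow> rho x, (y0, y1) \<leftarrow> rho y]
        [(y, hcom H h). (y, h) \<leftarrow> rho x]"
    using rc by (simp add: rcomodalg_def HV_plain)
  from veqR3_use[OF this assms] show ?thesis by simp
qed

lemma rho_counit:
  fixes F :: "'m \<Rightarrow> 'k"
  assumes "lin1 s F"
  shows "SP (rho x) (\<lambda>y h. hcou H h * F y) = F x"
proof -
  have "SP (rho x) (\<lambda>y h. s (hcou H h) y) = x"
    using rc by (simp add: rcomodalg_def sum_list_SP)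
  then have "F x = F (SP (rho x) (\<lambda>y h. s (hcou H h) y))" by simp
  also have "\<dots> = SP (rho x) (\<lambda>y h. hcou H h * F y)" by (simp add: lin1_rules[OF assms])
  finally show ?thesis by simp
qed

end

locale bicomod = lcomod H s m u lam + rcomod H s m u rho
  for H :: "('k::field, 'h::ab_group_add) bialg" and s :: "'k \<Rightarrow> 'm::ab_group_add \<Rightarrow> 'm" and m u lam rho +
  assumes bc: "bicomodalg H (plainvs s) m u lam rho"
begin

lemma bicompat:
  fixes T :: "'h \<Rightarrow> 'm \<Rightarrow> 'h \<Rightarrow> 'k"
  assumes "tril (hsc H) s (hsc H) T"
  shows "SP (rho x) (\<lambda>y g. SP (lam y) (\<lambda>h z. T h z g)) = SP (lam x) (\<lambda>h y. SP (rho y) (T h))"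
proof -
  have "veq (tens (plainvs (hsc H)) (tens (plainvs s) (plainvs (hsc H))))
        [(h, [(z, g)]). (y, g) \<leftarrow> rho x, (h, z) \<leftarrow> lam y]
        [(h, rho y). (h, y) \<leftarrow> lam x]"
    using bc by (simp add: bicomodalg_def HV_plain)
  from veqR3_use[OF this assms] show ?thesis by simp
qed

end

lemma bicomodI: "bialgebra H \<Longrightarrow> vector_space s \<Longrightarrow> bicomodalg H (plainvs s) m u lam rho \<Longrightarrow> bicomod H s m u lam rho"
  unfolding bicomod_def lcomod_def rcomod_def bicomod_axioms_def bia_def palg_def lcomod_axioms_def rcomod_axioms_def
  by (auto simp: bicomodalg_def lcomodalg_def)

locale ydm = lmod H s m u la + lcomod H s m u co
  for H :: "('k::field, 'h::ab_group_add) bialg" and s :: "'k \<Rightarrow> 'm::ab_group_add \<Rightarrow> 'm" and m u la co +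
  assumes yd: "ydalg H (plainvs s) m u la co"
begin

lemma YD:
  fixes G :: "'h \<Rightarrow> 'm \<Rightarrow> 'k"
  assumes "bil (hsc H) s G"
  shows "SP (hcom H h) (\<lambda>h1 h2. SP (co a) (\<lambda>b a0. G (hmul H h1 b) (la h2 a0)))
       = SP (hcom H h) (\<lambda>h1 h2. SP (co (la h1 a)) (\<lambda>c a0. G (hmul H c h2) a0))"
proof -
  have "veq (tens (plainvs (hsc H)) (plainvs s))
        [(hmul H h1 b, la h2 a0). (h1, h2) \<leftarrow> hcom H h, (b, a0) \<leftarrow> co a]
        [(hmul H c h2, a0). (h1, h2) \<leftarrow> hcom H h, (c, a0) \<leftarrow> co (la h1 a)]"
    using yd by (simp add: ydalg_def HV_plain)
  from veq2_use[OF this assms] show ?thesis by simp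
qed

end

lemma ydmI: "bialgebra H \<Longrightarrow> vector_space s \<Longrightarrow> ydalg H (plainvs s) m u la co \<Longrightarrow> ydm H s m u la co"
  unfolding ydm_def lcomod_def lmod_def ydm_axioms_def bia_def palg_def lcomod_axioms_def lmod_axioms_def
  by (auto simp: ydalg_def lcomodalg_def)

lemma SP_gsm[simp]: "SP (gsm_mul mM mN la co xs ys) F =
   SP xs (\<lambda>p n. SP ys (\<lambda>q n'. SP (co n) (\<lambda>h n0. F (mM p (la h q)) (mN n0 n'))))"
  by (simp add: gsm_mul_def)

lemma SP_cong2: "(\<And>a b. F a b = G a b) \<Longrightarrow> SP xs F = SP xs G" by (rule SP_cong) auto

locale gsm = M: lmod H sM mM uM laM + N: lcomod H sN mN uN coN
  for H :: "('k::field, 'h::ab_group_add) bialg" and sM :: "'k \<Rightarrow> 'm::ab_group_add \<Rightarrow> 'm" and mM uM laM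
   and sN :: "'k \<Rightarrow> 'n::ab_group_add \<Rightarrow> 'n" and mN uN coN
begin

abbreviation "mul \<equiv> gsm_mul mM mN laM coN"
abbreviation "X \<equiv> tens (plainvs sM) (plainvs sN)"

lemmas simpset = N.co_mul N.co_coassoc N.co_unit N.co_lin lin_defs

lemma assoc:
  fixes F :: "'m \<Rightarrow> 'n \<Rightarrow> 'k"
  assumes F: "bil sM sN F"
  shows "SP (mul (mul x y) z) F = SP (mul x (mul y z)) F"
  apply (simp add: bil_rules[OF F] simpset)
  apply (intro SP_cong2)
  subgoal for p n q n'
    apply (simp only: SP_swap[of z])
    apply (simp only: SP_swap[of "coN n'"])
    done
  done

lemma cong:
  assumes x: "veq X x x'" and y: "veq X y y'"
  shows "veq X (mul x y) (mul x' y')"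
proof (rule veq2_goal)
  fix F :: "'m \<Rightarrow> 'n \<Rightarrow> 'k" assume F: "bil sM sN F"
  have "bil sM sN (\<lambda>p n. SP y (\<lambda>q n'. SP (coN n) (\<lambda>h n0. F (mM p (laM h q)) (mN n0 n'))))"
    by (simp add: bil_rules[OF F] simpset)
  from veq2_use[OF x this] have 1: "SP (mul x y) F = SP (mul x' y) F" by simp
  have "bil sM sN (\<lambda>q n'. SP x' (\<lambda>p n. SP (coN n) (\<lambda>h n0. F (mM p (laM h q)) (mN n0 n'))))"
    by (simp add: bil_rules[OF F] simpset)
  from veq2_use[OF y this] have 2: "SP (mul x' y) F = SP (mul x' y') F" by (simp add: SP_swap[of x'])
  show "SP (mul x y) F = SP (mul x' y') F" using 1 2 by simp
qed

lemma salg: "salg X mul [(uM,uN)]"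
  unfolding salg_def
proof (intro conjI allI impI)
  show "svs X" by (rule svs_tens)
  show "veq X (mul x y) (mul x' y')" if "veq X x x'" "veq X y y'" for x x' y y' using cong that by blast
  show "veq X (mul (vadd X x y) z) (vadd X (mul x z) (mul y z))" for x y z
    by (rule veq2_goal) simp
  show "veq X (mul x (vadd X y z)) (vadd X (mul x y) (mul x z))" for x y z
    by (rule veq2_goal) simp
  show "veq X (mul (vsc X c x) y) (vsc X c (mul x y))" for c x y
  proof (rule veq2_goal)
    fix F :: "'m \<Rightarrow> 'n \<Rightarrow> 'k" assume F: "bil sM sN F"
    show "SP (mul (vsc X c x) y) F = SP (vsc X c (mul x y)) F" by (simp add: bil_rules[OF F])
  qed
  show "veq X (mul x (vsc X c y)) (vsc X c (mul x y))" for c x y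
  proof (rule veq2_goal)
    fix F :: "'m \<Rightarrow> 'n \<Rightarrow> 'k" assume F: "bil sM sN F"
    show "SP (mul x (vsc X c y)) F = SP (vsc X c (mul x y)) F" by (simp add: bil_rules[OF F])
  qed
  show "veq X (mul (mul x y) z) (mul x (mul y z))" for x y z
  proof (rule veq2_goal)
    fix F :: "'m \<Rightarrow> 'n \<Rightarrow> 'k" assume F: "bil sM sN F"
    show "SP (mul (mul x y) z) F = SP (mul x (mul y z)) F" by (rule assoc[OF F])
  qed
  show "veq X (mul [(uM, uN)] x) x" for x
  proof (rule veq2_goal)
    fix F :: "'m \<Rightarrow> 'n \<Rightarrow> 'k" assume F: "bil sM sN F"
    show "SP (mul [(uM, uN)] x) F = SP x F" by (simp add: bil_rules[OF F] simpset)
  qed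
  show "veq X (mul x [(uM, uN)]) x" for x
  proof (rule veq2_goal)
    fix F :: "'m \<Rightarrow> 'n \<Rightarrow> 'k" assume F: "bil sM sN F"
    show "SP (mul x [(uM, uN)]) F = SP x F" by (simp add: bil_rules[OF F] simpset N.co_counit)
  qed
qed

end

lemma SP_lact[simp]: "SP (sm_lact H laP laA h xs) F = SP xs (\<lambda>p a. SP (hcom H h) (\<lambda>h1 h2. F (laP h1 p) (laA h2 a)))"
  by (simp add: sm_lact_def)
lemma SP_ract[simp]: "SP (sm_ract raP xs h) F = SP xs (\<lambda>p a. F (raP p h) a)"
  by (simp add: sm_ract_def)

context ydm begin

lemma YD3:
  fixes Psi :: "'h \<Rightarrow> 'h \<Rightarrow> 'm \<Rightarrow> 'h \<Rightarrow> 'k"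
  assumes Q: "quadl (hsc H) (hsc H) s (hsc H) Psi"
  shows "SP (hcom H h) (\<lambda>k1 r1. SP (hcom H r1) (\<lambda>k2 r2. SP (hcom H r2) (\<lambda>k3 k4.
            SP (co (la k2 a)) (\<lambda>c n0. Psi k1 (hmul H c k3) n0 k4))))
       = SP (hcom H h) (\<lambda>k1 r1. SP (hcom H r1) (\<lambda>k2 r2. SP (hcom H r2) (\<lambda>k3 k4.
            SP (co a) (\<lambda>b a0. Psi k1 (hmul H k2 b) (la k3 a0) k4))))"
proof (rule SP_cong2)
  fix k1 r1
  have 1: "SP (hcom H r1) (\<lambda>k2 r2. SP (hcom H r2) (\<lambda>k3 k4. SP (co (la k2 a)) (\<lambda>c n0. Psi k1 (hmul H c k3) n0 k4)))
     = SP (hcom H r1) (\<lambda>s k4. SP (hcom H s) (\<lambda>k2 k3. SP (co (la k2 a)) (\<lambda>c n0. Psi k1 (hmul H c k3) n0 k4)))"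
    by (rule hcom_coassoc[symmetric]) (simp add: quadl_rules[OF Q] co_lin lin_defs)
  have 2: "SP (hcom H s) (\<lambda>k2 k3. SP (co (la k2 a)) (\<lambda>c n0. Psi k1 (hmul H c k3) n0 k4))
     = SP (hcom H s) (\<lambda>k2 k3. SP (co a) (\<lambda>b a0. Psi k1 (hmul H k2 b) (la k3 a0) k4))" for s k4
    by (rule YD[symmetric]) (simp add: quadl_rules[OF Q] lin_defs)
  have 3: "SP (hcom H r1) (\<lambda>s k4. SP (hcom H s) (\<lambda>k2 k3. SP (co a) (\<lambda>b a0. Psi k1 (hmul H k2 b) (la k3 a0) k4)))
     = SP (hcom H r1) (\<lambda>k2 r2. SP (hcom H r2) (\<lambda>k3 k4. SP (co a) (\<lambda>b a0. Psi k1 (hmul H k2 b) (la k3 a0) k4)))"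
    by (rule hcom_coassoc) (simp add: quadl_rules[OF Q] co_lin lin_defs)
  show "SP (hcom H r1) (\<lambda>k2 r2. SP (hcom H r2) (\<lambda>k3 k4. SP (co (la k2 a)) (\<lambda>c n0. Psi k1 (hmul H c k3) n0 k4)))
     = SP (hcom H r1) (\<lambda>k2 r2. SP (hcom H r2) (\<lambda>k3 k4. SP (co a) (\<lambda>b a0. Psi k1 (hmul H k2 b) (la k3 a0) k4)))"
    unfolding 1 2 3 ..
qed

end

locale part1 = P: bimod H sP mP uP laP raP + A: ydm H sA mA uA laA coA
  for H :: "('k::field, 'h::ab_group_add) bialg" and sP :: "'k \<Rightarrow> 'p::ab_group_add \<Rightarrow> 'p" and mP uP laP raP
   and sA :: "'k \<Rightarrow> 'a::ab_group_add \<Rightarrow> 'a" and mA uA laA coA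
begin

sublocale G: gsm H sP mP uP laP sA mA uA coA by unfold_locales

lemmas simpset = G.simpset P.hcom_mul P.hcom_one P.hcom_lin P.hcom_coassoc

lemma lact_mul:
  fixes F :: "'p \<Rightarrow> 'a \<Rightarrow> 'k"
  assumes F: "bil sP sA F"
  shows "SP (sm_lact H laP laA h (G.mul x y)) F = SP (concat [G.mul (sm_lact H laP laA h1 x) (sm_lact H laP laA h2 y). (h1, h2) \<leftarrow> hcom H h]) F"
  apply (simp add: bil_rules[OF F] simpset)
  apply (simp only: SP_swap[where ys=y])
  apply (simp only: SP_swap[where ys=x])
  apply (simp add: bil_rules[OF F] simpset)
  apply (intro SP_cong2)
  subgoal for p a q b
  proof -
    have Q: "quadl (hsc H) (hsc H) sA (hsc H) (\<lambda>k1 x n0 k4. F (mP (laP k1 p) (laP x q)) (mA n0 (laA k4 b)))"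
      by (simp add: bil_rules[OF F] lin_defs)
    show ?thesis
      apply (simp only: A.YD3[OF Q, simplified])
      apply (simp only: SP_swap[of "coA a"])
      done
  qed
  done


abbreviation "XP \<equiv> tens (plainvs sP) (plainvs sA)"
abbreviation "lact \<equiv> sm_lact H laP laA"
abbreviation "ract \<equiv> sm_ract raP"

lemma lmodalg_X: "lmodalg H XP G.mul [(uP,uA)] lact"
  unfolding lmodalg_def
proof (intro conjI allI impI)
  show "salg XP G.mul [(uP, uA)]" by (rule G.salg)
  show "slin XP XP (lact h)" for h
    unfolding slin_def
  proof (intro conjI allI impI)
    fix x x' assume x: "veq XP x x'"
    show "veq XP (lact h x) (lact h x')"
    proof (rule veq2_goal)
      fix F :: "'p \<Rightarrow> 'a \<Rightarrow> 'k" assume F: "bil sP sA F"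
      have "bil sP sA (\<lambda>p a. SP (hcom H h) (\<lambda>h1 h2. F (laP h1 p) (laA h2 a)))"
        by (simp add: bil_rules[OF F] simpset)
      from veq2_use[OF x this] show "SP (lact h x) F = SP (lact h x') F" by simp
    qed
  next
    fix x y show "veq XP (lact h (vadd XP x y)) (vadd XP (lact h x) (lact h y))"
      by (rule veq2_goal) simp
  next
    fix c x show "veq XP (lact h (vsc XP c x)) (vsc XP c (lact h x))"
      apply (rule veq2_goal) subgoal premises prems for F by (simp add: bil_rules[OF prems] simpset) done
  qed
  show "slin (HV H) XP (\<lambda>h. lact h x)" for x
    unfolding slin_def HV_simps
  proof (intro conjI allI impI)
    fix h h' :: 'h assume "h = h'" then show "veq XP (lact h x) (lact h' x)"
      by (simp add: veq_tens)
  next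
    fix h g show "veq XP (lact (h + g) x) (vadd XP (lact h x) (lact g x))"
      apply (rule veq2_goal) subgoal premises prems for F by (simp add: bil_rules[OF prems] simpset) done
  next
    fix c h show "veq XP (lact (hsc H c h) x) (vsc XP c (lact h x))"
      apply (rule veq2_goal) subgoal premises prems for F by (simp add: bil_rules[OF prems] simpset) done
  qed
  show "veq XP (lact (hmul H h g) x) (lact h (lact g x))" for h g x
    apply (rule veq2_goal) subgoal premises prems for F
      apply (simp add: bil_rules[OF prems] simpset)
      apply (intro SP_cong2)
      apply (rule SP_swap)
      done
    done
  show "veq XP (lact (hone H) x) x" for x
    apply (rule veq2_goal) subgoal premises prems for F by (simp add: bil_rules[OF prems] simpset) done
  show "veq XP (lact h (G.mul x y)) (vsum XP [G.mul (lact h1 x) (lact h2 y). (h1, h2) \<leftarrow> hcom H h])" for h x y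
    apply (rule veq2_goal) subgoal for F using lact_mul[of F h x y] by simp done
  show "veq XP (lact h [(uP, uA)]) (vsc XP (hcou H h) [(uP, uA)])" for h
    apply (rule veq2_goal) subgoal premises prems for F by (simp add: bil_rules[OF prems] simpset P.hcom_counitL) done
qed

lemma rmodalg_X: "rmodalg H XP G.mul [(uP,uA)] ract"
  unfolding rmodalg_def
proof (intro conjI allI impI)
  show "salg XP G.mul [(uP, uA)]" by (rule G.salg)
  show "slin XP XP (\<lambda>x. ract x h)" for h
    unfolding slin_def
  proof (intro conjI allI impI)
    fix x x' assume x: "veq XP x x'"
    show "veq XP (ract x h) (ract x' h)"
    proof (rule veq2_goal)
      fix F :: "'p \<Rightarrow> 'a \<Rightarrow> 'k" assume F: "bil sP sA F"
      have "bil sP sA (\<lambda>p a. F (raP p h) a)"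
        by (simp add: bil_rules[OF F] simpset)
      from veq2_use[OF x this] show "SP (ract x h) F = SP (ract x' h) F" by simp
    qed
  next
    fix x y show "veq XP (ract (vadd XP x y) h) (vadd XP (ract x h) (ract y h))"
      by (rule veq2_goal) simp
  next
    fix c x show "veq XP (ract (vsc XP c x) h) (vsc XP c (ract x h))"
      apply (rule veq2_goal) subgoal premises prems for F by (simp add: bil_rules[OF prems] simpset) done
  qed
  show "slin (HV H) XP (ract x)" for x
    unfolding slin_def HV_simps
  proof (intro conjI allI impI)
    fix h h' :: 'h assume "h = h'" then show "veq XP (ract x h) (ract x h')"
      by (simp add: veq_tens)
  next
    fix h g show "veq XP (ract x (h + g)) (vadd XP (ract x h) (ract x g))"
      apply (rule veq2_goal) subgoal premises prems for F by (simp add: bil_rules[OF prems] simpset) done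
  next
    fix c h show "veq XP (ract x (hsc H c h)) (vsc XP c (ract x h))"
      apply (rule veq2_goal) subgoal premises prems for F by (simp add: bil_rules[OF prems] simpset) done
  qed
  show "veq XP (ract x (hmul H h g)) (ract (ract x h) g)" for h g x
    apply (rule veq2_goal) subgoal premises prems for F by (simp add: bil_rules[OF prems] simpset) done
  show "veq XP (ract x (hone H)) x" for x
    apply (rule veq2_goal) subgoal premises prems for F by (simp add: bil_rules[OF prems] simpset) done
  show "veq XP (ract (G.mul x y) h) (vsum XP [G.mul (ract x h1) (ract y h2). (h1, h2) \<leftarrow> hcom H h])" for h x y
    apply (rule veq2_goal) subgoal premises prems for F
      apply (simp add: bil_rules[OF prems] simpset)
      apply (simp only: SP_swap[of "hcom H h"])
      done
    done
  show "veq XP (ract [(uP, uA)] h) (vsc XP (hcou H h) [(uP, uA)])" for h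
    apply (rule veq2_goal) subgoal premises prems for F by (simp add: bil_rules[OF prems] simpset) done
qed

lemma bimodalg_X: "bimodalg H XP G.mul [(uP,uA)] lact ract"
  unfolding bimodalg_def
proof (intro conjI allI)
  show "veq XP (lact h (ract x g)) (ract (lact h x) g)" for h x g
    apply (rule veq2_goal) subgoal premises prems for F by (simp add: bil_rules[OF prems] simpset) done
qed (fact lmodalg_X rmodalg_X)+

end

lemma veqR4_goal:
  fixes xs :: "('h::ab_group_add \<times> ('g::ab_group_add \<times> ('a::ab_group_add \<times> 'u::ab_group_add) list) list) list"
  assumes "\<And>Q::'h \<Rightarrow> 'g \<Rightarrow> 'a \<Rightarrow> 'u \<Rightarrow> 'k::field. quadl s1 s2 s3 s4 Q \<Longrightarrow>
     SP xs (\<lambda>v zs. SP zs (\<lambda>w ys. SP ys (Q v w))) = SP ys (\<lambda>v zs. SP zs (\<lambda>w ys. SP ys (Q v w)))"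
  shows "veq (tens (plainvs s1) (tens (plainvs s2) (tens (plainvs s3) (plainvs s4)))) xs ys"
proof (rule veqR_goal)
  fix T :: "'h \<Rightarrow> 'g \<Rightarrow> ('a \<times> 'u) list \<Rightarrow> 'k"
  assume T1: "\<forall>v. bilin (plainvs s2) (tens (plainvs s3) (plainvs s4)) (T v)"
     and T2: "\<forall>w x. lfun (plainvs s1) (\<lambda>v. T v w x)"
  define Q where "Q v w a u = T v w [(a,u)]" for v w a u
  have e: "T v w zs = SP zs (Q v w)" for v w zs
    unfolding Q_def using lfun_tens_decomp[OF bilin_lfun2[OF T1[rule_format, of v]]] by blast
  have qd: "quadl s1 s2 s3 s4 Q"
    unfolding quadl_def
  proof (intro conjI allI)
    show "lin1 s1 (\<lambda>x. Q x y z w)" for y z w using T2 by (auto simp: Q_def[abs_def] lfun_plain)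
    show "lin1 s2 (\<lambda>y. Q x y z w)" for x z w using bilin_lfun1[OF T1[rule_format, of x]]
      by (auto simp: Q_def[abs_def] lfun_plain)
    show "lin1 s3 (\<lambda>z. Q x y z w)" "lin1 s4 (Q x y z)" for x y z w
      using lfun_tens_bilin[OF bilin_lfun2[OF T1[rule_format, of x]], of y]
      by (auto simp: Q_def[abs_def] bilin_plain bil_def)
  qed
  have e': "T = (\<lambda>v w zs. SP zs (\<lambda>a u. Q v w a u))" using e by (intro ext) simp
  from assms[OF qd] show "SP xs (\<lambda>v zs. SP zs (T v)) = SP ys (\<lambda>v zs. SP zs (T v))"
    by (simp add: e')
qed

lemma veqLR4_goal:
  fixes xs :: "(('a::ab_group_add \<times> 'u::ab_group_add) list \<times> ('h::ab_group_add \<times> 'g::ab_group_add) list) list"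
  assumes "\<And>Q::'a \<Rightarrow> 'u \<Rightarrow> 'h \<Rightarrow> 'g \<Rightarrow> 'k::field. quadl s1 s2 s3 s4 Q \<Longrightarrow>
     SP xs (\<lambda>zs ws. SP zs (\<lambda>a u. SP ws (Q a u))) = SP ys (\<lambda>zs ws. SP zs (\<lambda>a u. SP ws (Q a u)))"
  shows "veq (tens (tens (plainvs s1) (plainvs s2)) (tens (plainvs s3) (plainvs s4))) xs ys"
  unfolding veq_tens
proof (intro allI impI)
  fix f :: "('a \<times> 'u) list \<Rightarrow> ('h \<times> 'g) list \<Rightarrow> 'k"
  assume f: "bilin (tens (plainvs s1) (plainvs s2)) (tens (plainvs s3) (plainvs s4)) f"
  define Q where "Q a u h g = f [(a,u)] [(h,g)]" for a u h g
  have e1: "f zs ws = SP zs (\<lambda>a u. f [(a,u)] ws)" for zs ws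
    using lfun_tens_decomp[OF bilin_lfun1[OF f]] by blast
  have e2: "f zs ws = SP ws (\<lambda>h g. f zs [(h,g)])" for zs ws
    using lfun_tens_decomp[OF bilin_lfun2[OF f]] by blast
  have e: "f zs ws = SP zs (\<lambda>a u. SP ws (Q a u))" for zs ws
    unfolding Q_def by (subst e1) (subst e2, rule refl)
  have qd: "quadl s1 s2 s3 s4 Q"
    unfolding quadl_def
  proof (intro conjI allI)
    show "lin1 s1 (\<lambda>x. Q x y z w)" "lin1 s2 (\<lambda>y. Q x y z w)" for x y z w
      using lfun_tens_bilin[OF bilin_lfun1[OF f], of "[(z,w)]"]
      by (auto simp: Q_def[abs_def] bilin_plain bil_def)
    show "lin1 s3 (\<lambda>z. Q x y z w)" "lin1 s4 (Q x y z)" for x y z w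
      using lfun_tens_bilin[OF bilin_lfun2[OF f], of "[(x,y)]"]
      by (auto simp: Q_def[abs_def] bilin_plain bil_def)
  qed
  have e': "f = (\<lambda>zs ws. SP zs (\<lambda>a u. SP ws (Q a u)))" using e by (intro ext) simp
  from assms[OF qd] show "SP xs f = SP ys f" by (simp add: e')
qed

lemma veqRL4_goal:
  fixes xs :: "('h::ab_group_add \<times> (('a::ab_group_add \<times> 'u::ab_group_add) list \<times> 'g::ab_group_add) list) list"
  assumes "\<And>Q::'h \<Rightarrow> 'a \<Rightarrow> 'u \<Rightarrow> 'g \<Rightarrow> 'k::field. quadl s1 s2 s3 s4 Q \<Longrightarrow>
     SP xs (\<lambda>v ys. SP ys (\<lambda>zs g. SP zs (\<lambda>a u. Q v a u g))) = SP ys (\<lambda>v ys. SP ys (\<lambda>zs g. SP zs (\<lambda>a u. Q v a u g)))"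
  shows "veq (tens (plainvs s1) (tens (tens (plainvs s2) (plainvs s3)) (plainvs s4))) xs ys"
proof (rule veqR_goal)
  fix T :: "'h \<Rightarrow> ('a \<times> 'u) list \<Rightarrow> 'g \<Rightarrow> 'k"
  assume T1: "\<forall>v. bilin (tens (plainvs s2) (plainvs s3)) (plainvs s4) (T v)"
     and T2: "\<forall>w x. lfun (plainvs s1) (\<lambda>v. T v w x)"
  define Q where "Q v a u g = T v [(a,u)] g" for v a u g
  have e: "T v zs g = SP zs (\<lambda>a u. Q v a u g)" for v zs g
    unfolding Q_def using lfun_tens_decomp[OF bilin_lfun1[OF T1[rule_format, of v]]] by blast
  have qd: "quadl s1 s2 s3 s4 Q"
    unfolding quadl_def
  proof (intro conjI allI)
    show "lin1 s1 (\<lambda>x. Q x y z w)" for y z w using T2 by (auto simp: Q_def[abs_def] lfun_plain)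
    show "lin1 s2 (\<lambda>y. Q x y z w)" "lin1 s3 (\<lambda>z. Q x y z w)" for x y z w
      using lfun_tens_bilin[OF bilin_lfun1[OF T1[rule_format, of x]], of w]
      by (auto simp: Q_def[abs_def] bilin_plain bil_def)
    show "lin1 s4 (Q x y z)" for x y z
      using bilin_lfun2[OF T1[rule_format, of x], of "[(y,z)]"] by (auto simp: Q_def[abs_def] lfun_plain)
  qed
  have e': "T = (\<lambda>v zs g. SP zs (\<lambda>a u. Q v a u g))" using e by (intro ext) simp
  from assms[OF qd] show "SP xs (\<lambda>v zs. SP zs (T v)) = SP ys (\<lambda>v zs. SP zs (T v))"
    by (simp add: e')
qed

lemma bil_prules:
  fixes G :: "'x::comm_monoid_add \<Rightarrow> 'y::comm_monoid_add \<Rightarrow> 'k::comm_ring"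
  assumes "bil s1 s2 G"
  shows "G (x+x') = (\<lambda>y. G x y + G x' y)" "G (s1 c x) = (\<lambda>y. c * G x y)"
  using bil_rules[OF assms] by (auto intro!: ext)

lemma tril_prules:
  fixes T :: "'x::comm_monoid_add \<Rightarrow> 'y::comm_monoid_add \<Rightarrow> 'z::comm_monoid_add \<Rightarrow> 'k::comm_ring"
  assumes "tril s1 s2 s3 T"
  shows "T (x+x') = (\<lambda>y z. T x y z + T x' y z)" "T (s1 c x) = (\<lambda>y z. c * T x y z)"
    "T x (y+y') = (\<lambda>z. T x y z + T x y' z)" "T x (s2 c y) = (\<lambda>z. c * T x y z)"
  using tril_rules[OF assms] by (auto intro!: ext)

lemma quadl_prules:
  fixes Q :: "'x::comm_monoid_add \<Rightarrow> 'y::comm_monoid_add \<Rightarrow> 'z::comm_monoid_add \<Rightarrow> 'w::comm_monoid_add \<Rightarrow> 'k::comm_ring"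
  assumes "quadl s1 s2 s3 s4 Q"
  shows "Q (x+x') = (\<lambda>y z w. Q x y z w + Q x' y z w)" "Q (s1 c x) = (\<lambda>y z w. c * Q x y z w)"
    "Q x (y+y') = (\<lambda>z w. Q x y z w + Q x y' z w)" "Q x (s2 c y) = (\<lambda>z w. c * Q x y z w)"
    "Q x y (z+z') = (\<lambda>w. Q x y z w + Q x y z' w)" "Q x y (s3 c z) = (\<lambda>w. c * Q x y z w)"
  using quadl_rules[OF assms] by (auto intro!: ext)

lemma SP_lco[simp]: "SP (sm_lco H coA lam xs) F = SP xs (\<lambda>a u. SP (coA a) (\<lambda>b a0. SP (lam u) (\<lambda>h u0. F (hmul H b h) [(a0,u0)])))"
  by (simp add: sm_lco_def)
lemma SP_rco[simp]: "SP (sm_rco rho xs) F = SP xs (\<lambda>a u. SP (rho u) (\<lambda>u0 g. F [(a,u0)] g))"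
  by (simp add: sm_rco_def)

locale part2 = A: ydm H sA mA uA laA coA + U: bicomod H sU mU uU lamU rhoU
  for H :: "('k::field, 'h::ab_group_add) bialg" and sA :: "'k \<Rightarrow> 'a::ab_group_add \<Rightarrow> 'a" and mA uA laA coA
   and sU :: "'k \<Rightarrow> 'u::ab_group_add \<Rightarrow> 'u" and mU uU lamU rhoU
begin

sublocale G: gsm H sA mA uA laA sU mU uU lamU by unfold_locales

lemmas simpset = G.simpset A.hcom_mul A.hcom_one A.hcom_lin A.hcom_coassoc A.co_mul A.co_lin A.co_coassoc A.co_unit
  U.rho_mul U.rho_lin U.rho_coassoc U.rho_unit U.bicompat

abbreviation "XA \<equiv> tens (plainvs sA) (plainvs sU)"
abbreviation "lco \<equiv> sm_lco H coA lamU"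
abbreviation "rco \<equiv> sm_rco rhoU"

lemma YDL:
  fixes Psi :: "'h \<Rightarrow> 'a \<Rightarrow> 'u \<Rightarrow> 'k"
  assumes Q: "tril (hsc H) sA sU Psi"
  shows "SP (lamU n) (\<lambda>h n0. SP (coA (laA h q)) (\<lambda>c a0. SP (lamU n0) (\<lambda>h' m. Psi (hmul H c h') a0 m)))
       = SP (lamU n) (\<lambda>h n0. SP (coA q) (\<lambda>b a0. SP (lamU n0) (\<lambda>h' m. Psi (hmul H h b) (laA h' a0) m)))"
proof -
  have 1: "SP (lamU n) (\<lambda>h n0. SP (coA (laA h q)) (\<lambda>c a0. SP (lamU n0) (\<lambda>h' m. Psi (hmul H c h') a0 m)))
     = SP (lamU n) (\<lambda>h n0. SP (lamU n0) (\<lambda>h' m. SP (coA (laA h q)) (\<lambda>c a0. Psi (hmul H c h') a0 m)))"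
    by (intro SP_cong2 SP_swap)
  have 2: "\<dots> = SP (lamU n) (\<lambda>k m. SP (hcom H k) (\<lambda>h h'. SP (coA (laA h q)) (\<lambda>c a0. Psi (hmul H c h') a0 m)))"
    by (rule U.co_coassoc[symmetric]) (simp add: tril_rules[OF Q] simpset lin_defs)
  have 3: "\<dots> = SP (lamU n) (\<lambda>k m. SP (hcom H k) (\<lambda>h h'. SP (coA q) (\<lambda>b a0. Psi (hmul H h b) (laA h' a0) m)))"
    by (intro SP_cong2 A.YD[symmetric]) (simp add: tril_rules[OF Q] lin_defs)
  have 4: "\<dots> = SP (lamU n) (\<lambda>h n0. SP (lamU n0) (\<lambda>h' m. SP (coA q) (\<lambda>b a0. Psi (hmul H h b) (laA h' a0) m)))"
    by (rule U.co_coassoc) (simp add: tril_rules[OF Q] simpset lin_defs)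
  have 5: "\<dots> = SP (lamU n) (\<lambda>h n0. SP (coA q) (\<lambda>b a0. SP (lamU n0) (\<lambda>h' m. Psi (hmul H h b) (laA h' a0) m)))"
    by (intro SP_cong2 SP_swap)
  show ?thesis using 1 2 3 4 5 by simp
qed

lemma lco_mul:
  "veq (tens (HV H) XA) (lco (G.mul x y)) [(hmul H h g, G.mul x' y'). (h, x') \<leftarrow> lco x, (g, y') \<leftarrow> lco y]"
  unfolding HV_plain
  apply (rule veqR3_goal) subgoal premises prems for T
  apply (simp add: tril_rules[OF prems] tril_prules[OF prems] simpset)
  apply (simp only: SP_swap[where ys=y])
  apply (intro SP_cong2)
  subgoal for q n' p n
    apply (simp only: SP_swap[where ys="coA p"])
    apply (rule SP_cong2)
    subgoal for ha x'
    proof -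
      have Q: "tril (hsc H) sA sU (\<lambda>z a0 m. SP (lamU n') (\<lambda>ga y'a. T (hmul H ha (hmul H z ga)) (mA x' a0) (mU m y'a)))"
        by (simp add: tril_rules[OF prems] tril_prules[OF prems] simpset)
      show ?thesis
        apply (simp only: YDL[OF Q, simplified])
        apply (simp only: SP_swap[of "lamU n'"])
        done
    qed
    done
  done
  done

lemma lco_slin: "slin XA (tens (plainvs (hsc H)) XA) lco"
  unfolding slin_def
proof (intro conjI allI impI)
  fix x x' assume x: "veq XA x x'"
  show "veq (tens (plainvs (hsc H)) XA) (lco x) (lco x')"
  proof (rule veqR3_goal)
    fix T :: "'h \<Rightarrow> 'a \<Rightarrow> 'u \<Rightarrow> 'k" assume T: "tril (hsc H) sA sU T"
    have "bil sA sU (\<lambda>a u. SP (coA a) (\<lambda>b a0. SP (lamU u) (\<lambda>h u0. T (hmul H b h) a0 u0)))"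
      by (simp add: tril_rules[OF T] tril_prules[OF T] simpset)
    from veq2_use[OF x this] show "SP (lco x) (\<lambda>v zs. SP zs (T v)) = SP (lco x') (\<lambda>v zs. SP zs (T v))" by simp
  qed
next
  fix x y show "veq (tens (plainvs (hsc H)) XA) (lco (vadd XA x y)) (vadd (tens (plainvs (hsc H)) XA) (lco x) (lco y))"
    by (rule veqR3_goal) simp
next
  fix c x show "veq (tens (plainvs (hsc H)) XA) (lco (vsc XA c x)) (vsc (tens (plainvs (hsc H)) XA) c (lco x))"
    apply (rule veqR3_goal) subgoal premises prems for T by (simp add: tril_rules[OF prems] tril_prules[OF prems] simpset) done
qed

lemma lco_coassoc: "veq (tens (HV H) (tens (HV H) XA))
        [(h1, [(h2, y)]). (h, y) \<leftarrow> lco x, (h1, h2) \<leftarrow> hcom H h]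
        [(h, lco y). (h, y) \<leftarrow> lco x]"
  unfolding HV_plain
  apply (rule veqR4_goal) subgoal premises prems for Q
    apply (simp add: quadl_rules[OF prems] quadl_prules[OF prems] simpset)
    apply (rule SP_cong2)
    subgoal for a u
      apply (simp only: SP_swap[of "lamU u"])
      apply (simp add: quadl_rules[OF prems] quadl_prules[OF prems] simpset)
      done
    done
  done

lemma lco_counit: "veq XA (vsum XA [vsc XA (hcou H h) y. (h, y) \<leftarrow> lco x]) x"
  apply (rule veq2_goal) subgoal premises prems for F
    by (simp add: bil_rules[OF prems] bil_prules[OF prems] simpset A.co_counit U.co_counit mult.assoc)
  done

lemma lco_unit: "veq (tens (HV H) XA) (lco [(uA, uU)]) [(hone H, [(uA, uU)])]"
  unfolding HV_plain
  apply (rule veqR3_goal) subgoal premises prems for T by (simp add: tril_rules[OF prems] tril_prules[OF prems] simpset) done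

lemma rco_slin: "slin XA (tens XA (plainvs (hsc H))) rco"
  unfolding slin_def
proof (intro conjI allI impI)
  fix x x' assume x: "veq XA x x'"
  show "veq (tens XA (plainvs (hsc H))) (rco x) (rco x')"
  proof (rule veqL3_goal)
    fix T :: "'a \<Rightarrow> 'u \<Rightarrow> 'h \<Rightarrow> 'k" assume T: "tril sA sU (hsc H) T"
    have "bil sA sU (\<lambda>a u. SP (rhoU u) (\<lambda>u0 g. T a u0 g))"
      by (simp add: tril_rules[OF T] tril_prules[OF T] simpset)
    from veq2_use[OF x this] show "SP (rco x) (\<lambda>zs x. SP zs (\<lambda>v w. T v w x)) = SP (rco x') (\<lambda>zs x. SP zs (\<lambda>v w. T v w x))" by simp
  qed
next
  fix x y show "veq (tens XA (plainvs (hsc H))) (rco (vadd XA x y)) (vadd (tens XA (plainvs (hsc H))) (rco x) (rco y))"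
    by (rule veqL3_goal) simp
next
  fix c x show "veq (tens XA (plainvs (hsc H))) (rco (vsc XA c x)) (vsc (tens XA (plainvs (hsc H))) c (rco x))"
    apply (rule veqL3_goal) subgoal premises prems for T by (simp add: tril_rules[OF prems] tril_prules[OF prems] simpset) done
qed

lemma rco_coassoc: "veq (tens XA (tens (HV H) (HV H)))
        [(y0, [(y1, h)]). (y, h) \<leftarrow> rco x, (y0, y1) \<leftarrow> rco y]
        [(y, hcom H h). (y, h) \<leftarrow> rco x]"
  unfolding HV_plain
  apply (rule veqLR4_goal) subgoal premises prems for Q
    by (simp add: quadl_rules[OF prems] quadl_prules[OF prems] simpset)
  done

lemma rco_counit: "veq XA (vsum XA [vsc XA (hcou H h) y. (y, h) \<leftarrow> rco x]) x"
  apply (rule veq2_goal) subgoal premises prems for F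
    by (simp add: bil_rules[OF prems] simpset U.rho_counit)
  done

lemma rco_mul: "veq (tens XA (HV H)) (rco (G.mul x y)) [(G.mul x' y', hmul H h g). (x', h) \<leftarrow> rco x, (y', g) \<leftarrow> rco y]"
  unfolding HV_plain
  apply (rule veqL3_goal) subgoal premises prems for T
    apply (simp add: tril_rules[OF prems] tril_prules[OF prems] simpset)
    apply (simp only: SP_swap[where ys=y])
    apply (intro SP_cong2)
    subgoal for q n' p n
      apply (simp only: SP_swap[of "rhoU n'"])
      apply (simp add: tril_rules[OF prems] tril_prules[OF prems] simpset)
      done
    done
  done

lemma rco_unit: "veq (tens XA (HV H)) (rco [(uA, uU)]) [([(uA, uU)], hone H)]"
  unfolding HV_plain
  apply (rule veqL3_goal) subgoal premises prems for T by (simp add: tril_rules[OF prems] tril_prules[OF prems] simpset) done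

lemma bi_compat: "veq (tens (HV H) (tens XA (HV H)))
        [(h, [(z, g)]). (y, g) \<leftarrow> rco x, (h, z) \<leftarrow> lco y]
        [(h, rco y). (h, y) \<leftarrow> lco x]"
  unfolding HV_plain
  apply (rule veqRL4_goal) subgoal premises prems for Q
    apply (simp add: quadl_rules[OF prems] quadl_prules[OF prems] simpset)
    apply (rule SP_cong2)
    subgoal for a u
      apply (simp only: SP_swap[where ys="coA a"])
      apply (simp add: quadl_rules[OF prems] quadl_prules[OF prems] simpset)
      done
    done
  done

lemma bicomodalg_XA: "bicomodalg H XA G.mul [(uA,uU)] lco rco"
  unfolding bicomodalg_def lcomodalg_def rcomodalg_def HV_plain
  by (intro conjI allI; rule G.salg lco_slin lco_coassoc[unfolded HV_plain] lco_counit lco_mul[unfolded HV_plain]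
     lco_unit[unfolded HV_plain] rco_slin rco_coassoc[unfolded HV_plain] rco_counit rco_mul[unfolded HV_plain]
     rco_unit[unfolded HV_plain] bi_compat[unfolded HV_plain])

end

lemma SP_lr[simp]: "SP (lr_mul mB mU laB raB lam rho xs ys) F =
  SP xs (\<lambda>p u. SP ys (\<lambda>q u'. SP (rho u') (\<lambda>u0' g. SP (lam u) (\<lambda>h u0. F (mB (raB p g) (laB h q)) (mU u0 u0')))))"
  by (simp add: lr_mul_def)

lemma SP_reassoc[simp]: "SP (reassoc xs) F = SP xs (\<lambda>ys u. SP ys (\<lambda>p a. F p [(a,u)]))"
  by (simp add: reassoc_def)

locale part3 = p1: part1 H sP mP uP laP raP sA mA uA laA coA + p2: part2 H sA mA uA laA coA sU mU uU lamU rhoU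
  for H :: "('k::field, 'h::ab_group_add) bialg" and sP :: "'k \<Rightarrow> 'p::ab_group_add \<Rightarrow> 'p" and mP uP laP raP
   and sA :: "'k \<Rightarrow> 'a::ab_group_add \<Rightarrow> 'a" and mA uA laA coA
   and sU :: "'k \<Rightarrow> 'u::ab_group_add \<Rightarrow> 'u" and mU uU lamU rhoU
begin

lemmas simpset = p1.simpset p2.simpset p1.P.hcom_mul

abbreviation "XX \<equiv> tens (tens (plainvs sP) (plainvs sA)) (plainvs sU)"
abbreviation "YY \<equiv> tens (plainvs sP) (tens (plainvs sA) (plainvs sU))"
abbreviation "mX \<equiv> lr_mul p1.G.mul mU p1.lact p1.ract lamU rhoU"
abbreviation "mY \<equiv> lr_mul mP p2.G.mul laP raP p2.lco p2.rco"

lemma pullH: "NO_MATCH (hcom H z) B \<Longrightarrow>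
  SP B (\<lambda>c d. SP (hcom H a) (\<lambda>x y. F c d x y)) = SP (hcom H a) (\<lambda>x y. SP B (\<lambda>c d. F c d x y))"
  by (rule SP_swap)
lemma pullL: "NO_MATCH (hcom H z) B \<Longrightarrow> NO_MATCH (lamU z2) B \<Longrightarrow>
  SP B (\<lambda>c d. SP (lamU a) (\<lambda>x y. F c d x y)) = SP (lamU a) (\<lambda>x y. SP B (\<lambda>c d. F c d x y))"
  by (rule SP_swap)
lemma pullC: "NO_MATCH (hcom H z) B \<Longrightarrow> NO_MATCH (lamU z2) B \<Longrightarrow> NO_MATCH (coA z3) B \<Longrightarrow>
  SP B (\<lambda>c d. SP (coA a) (\<lambda>x y. F c d x y)) = SP (coA a) (\<lambda>x y. SP B (\<lambda>c d. F c d x y))"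
  by (rule SP_swap)

lemma veq_refl: "veq (tens V W) x x" by (simp add: veq_tens)

lemma lact_mul_ctx:
  assumes T: "tril sP sA sU T"
  shows "SP (p1.G.mul X (p1.lact h (p1.G.mul Y Z))) (\<lambda>v w. T v w u)
       = SP (p1.G.mul X (concat (map (\<lambda>(h1,h2). p1.G.mul (p1.lact h1 Y) (p1.lact h2 Z)) (hcom H h)))) (\<lambda>v w. T v w u)"
proof -
  have "veq p1.XP (p1.lact h (p1.G.mul Y Z)) (vsum p1.XP [p1.G.mul (p1.lact h1 Y) (p1.lact h2 Z). (h1, h2) \<leftarrow> hcom H h])"
    using p1.lmodalg_X by (simp add: lmodalg_def)
  then have "veq p1.XP (p1.G.mul X (p1.lact h (p1.G.mul Y Z)))
      (p1.G.mul X (concat (map (\<lambda>(h1,h2). p1.G.mul (p1.lact h1 Y) (p1.lact h2 Z)) (hcom H h))))"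
    by (intro p1.G.cong veq_refl) simp
  moreover have "bil sP sA (\<lambda>v w. T v w u)" using T by (simp add: tril_def bil_def)
  ultimately show ?thesis by (rule veq2_use)
qed

lemma assocX: "veq XX (mX (mX x y) z) (mX x (mX y z))"
  apply (rule veqL3_goal) subgoal premises prems for T
    apply (simp only: SP_lr)
    apply (simp only: lact_mul_ctx[OF prems])
    apply (simp add: tril_rules[OF prems] tril_prules[OF prems] simpset)
    apply (simp only: SP_swap[where ys=z])
    apply (simp only: SP_swap[where ys=y])
    apply (simp only: SP_swap[where ys=x])
    apply (intro SP_cong2)
    subgoal for zs1 u1 zs2 u2 zs3 u3
      apply (simp only: SP_swap[where ys=zs3])
      apply (simp only: SP_swap[where ys=zs2])
      apply (simp only: SP_swap[where ys=zs1])
      apply (intro SP_cong2)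
      subgoal for p1 a1 p2 a2 p3 a3
        apply (simp add: tril_rules[OF prems] tril_prules[OF prems] simpset pullH pullL pullC)
        apply (simp only: SP_swap[where ys="lamU u1"])
        apply (rule SP_cong2) subgoal for k1 r1
        apply (simp only: SP_swap[where ys="lamU r1"])
        apply (rule SP_cong2) subgoal for k2 r2
        apply (simp only: SP_swap[where ys="lamU r2"])
        apply (rule SP_cong2) subgoal for k3 r3
        apply (simp only: SP_swap[where ys="lamU r3"])
        apply (intro SP_cong2) subgoal for k4 r4 g s1 y2 s2
        apply (simp only: SP_swap[where ys="coA a1"])
        apply (rule SP_cong2) subgoal for c1 n1
        apply (simp only: SP_swap[where ys="coA n1"])
        apply (intro SP_cong2)
        apply (simp only: SP_swap[where ys="rhoU u3"])
        done done done done done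
        done
      done
    done
  done

lemma mulXY: "veq YY (reassoc (mX x y)) (mY (reassoc x) (reassoc y))"
  apply (rule veqR3_goal) subgoal premises prems for T
    apply (simp add: tril_rules[OF prems] tril_prules[OF prems] simpset)
    apply (simp only: SP_swap[where ys=y])
    apply (simp only: SP_swap[where ys=x])
    apply (intro SP_cong2)
    subgoal for zs1 u1 zs2 u2
      apply (simp only: SP_swap[where ys=zs2])
      apply (simp only: SP_swap[where ys=zs1])
      apply (intro SP_cong2)
      subgoal for p1 a1 p2 a2
        by (simp add: tril_rules[OF prems] tril_prules[OF prems] simpset pullH pullL pullC)
      done
    done
  done

lemma congX:
  assumes x: "veq XX x x'" and y: "veq XX y y'"
  shows "veq XX (mX x y) (mX x' y')"
proof (rule veqL3_goal)
  fix T :: "'p \<Rightarrow> 'a \<Rightarrow> 'u \<Rightarrow> 'k" assume T: "tril sP sA sU T"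
  define F1 where "F1 y p a u = SP y (\<lambda>q u'. SP (rhoU u') (\<lambda>u0' g. SP (lamU u) (\<lambda>h u0. SP q (\<lambda>pa aa.
      SP (hcom H h) (\<lambda>h1 h2. SP (coA a) (\<lambda>c n0. T (mP (raP p g) (laP c (laP h1 pa))) (mA n0 (laA h2 aa)) (mU u0 u0')))))))"
    for y p a u
  define F2 where "F2 x q b v = SP x (\<lambda>zs w. SP (rhoU v) (\<lambda>v0 g. SP (lamU w) (\<lambda>h w0. SP zs (\<lambda>p a.
      SP (hcom H h)(\<lambda>h1 h2. SP (coA a)(\<lambda>c a0. T (mP (raP p g) (laP c (laP h1 q))) (mA a0 (laA h2 b)) (mU w0 v0)))))))"
    for x q b v
  have e1: "SP (mX x y) (\<lambda>zs u. SP zs (\<lambda>v w. T v w u)) = SP x (\<lambda>zs u. SP zs (\<lambda>p a. F1 y p a u))" for x y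
    apply (simp add: tril_rules[OF T] tril_prules[OF T] simpset)
    apply (rule SP_cong2) subgoal for zs u
    apply (simp only: SP_swap[where ys=zs])
    apply (simp add: F1_def[abs_def])
    done done
  have e2: "SP (mX x y) (\<lambda>zs u. SP zs (\<lambda>v w. T v w u)) = SP y (\<lambda>zs u. SP zs (\<lambda>p a. F2 x p a u))" for x y
    apply (simp add: tril_rules[OF T] tril_prules[OF T] simpset)
    apply (simp only: SP_swap[where ys=y])
    apply (rule SP_cong2) subgoal for zs u
    apply (simp only: SP_swap[where ys=zs])
    apply (simp add: F2_def[abs_def])
    done done
  have t1: "tril sP sA sU (F1 y)" for y
    unfolding F1_def[abs_def] by (simp add: tril_rules[OF T] tril_prules[OF T] simpset)
  have t2: "tril sP sA sU (F2 x)" for x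
    unfolding F2_def[abs_def] by (simp add: tril_rules[OF T] tril_prules[OF T] simpset)
  have "SP (mX x y) (\<lambda>zs u. SP zs (\<lambda>v w. T v w u)) = SP x (\<lambda>zs u. SP zs (\<lambda>p a. F1 y p a u))" by (rule e1)
  also have "\<dots> = SP x' (\<lambda>zs u. SP zs (\<lambda>p a. F1 y p a u))" by (rule veqL3_use[OF x t1[of y]])
  also have "\<dots> = SP (mX x' y) (\<lambda>zs u. SP zs (\<lambda>v w. T v w u))" by (rule e1[symmetric])
  also have "\<dots> = SP y (\<lambda>zs u. SP zs (\<lambda>p a. F2 x' p a u))" by (rule e2)
  also have "\<dots> = SP y' (\<lambda>zs u. SP zs (\<lambda>p a. F2 x' p a u))" by (rule veqL3_use[OF y t2[of x']])
  also have "\<dots> = SP (mX x' y') (\<lambda>zs u. SP zs (\<lambda>v w. T v w u))" by (rule e2[symmetric])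
  finally show "SP (mX x y) (\<lambda>zs u. SP zs (\<lambda>v w. T v w u)) = SP (mX x' y') (\<lambda>zs u. SP zs (\<lambda>v w. T v w u))" .
qed

lemma congY:
  assumes x: "veq YY x x'" and y: "veq YY y y'"
  shows "veq YY (mY x y) (mY x' y')"
proof (rule veqR3_goal)
  fix T :: "'p \<Rightarrow> 'a \<Rightarrow> 'u \<Rightarrow> 'k" assume T: "tril sP sA sU T"
  define F1 where "F1 y p a u = SP y (\<lambda>q ws. SP ws (\<lambda>b v. SP (rhoU v) (\<lambda>v0 g. SP (coA a) (\<lambda>c a0.
      SP (lamU u) (\<lambda>h w. SP (lamU w) (\<lambda>h' w0. T (mP (raP p g) (laP c (laP h q))) (mA a0 (laA h' b)) (mU w0 v0)))))))"
    for y p a u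
  define F2 where "F2 x q b v = SP x (\<lambda>p zs. SP (rhoU v) (\<lambda>v0 g. SP zs (\<lambda>a u. SP (coA a)(\<lambda>c a0.
      SP (lamU u)(\<lambda>h w. SP (lamU w) (\<lambda>h' w0. T (mP (raP p g) (laP c (laP h q))) (mA a0 (laA h' b)) (mU w0 v0)))))))"
    for x q b v
  have e1: "SP (mY x y) (\<lambda>p zs. SP zs (T p)) = SP x (\<lambda>p zs. SP zs (F1 y p))" for x y
    apply (simp add: tril_rules[OF T] tril_prules[OF T] simpset)
    apply (rule SP_cong2) subgoal for p zs
    apply (simp only: SP_swap[where ys=zs])
    apply (simp add: F1_def[abs_def])
    done done
  have e2: "SP (mY x y) (\<lambda>p zs. SP zs (T p)) = SP y (\<lambda>p zs. SP zs (F2 x p))" for x y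
    apply (simp add: tril_rules[OF T] tril_prules[OF T] simpset)
    apply (simp only: SP_swap[where ys=y])
    apply (rule SP_cong2) subgoal for p zs
    apply (simp only: SP_swap[where ys=zs])
    apply (simp add: F2_def[abs_def])
    done done
  have t1: "tril sP sA sU (F1 y)" for y
    unfolding F1_def[abs_def] by (simp add: tril_rules[OF T] tril_prules[OF T] simpset)
  have t2: "tril sP sA sU (F2 x)" for x
    unfolding F2_def[abs_def] by (simp add: tril_rules[OF T] tril_prules[OF T] simpset)
  have "SP (mY x y) (\<lambda>p zs. SP zs (T p)) = SP x (\<lambda>p zs. SP zs (F1 y p))" by (rule e1)
  also have "\<dots> = SP x' (\<lambda>p zs. SP zs (F1 y p))" by (rule veqR3_use[OF x t1[of y]])
  also have "\<dots> = SP (mY x' y) (\<lambda>p zs. SP zs (T p))" by (rule e1[symmetric])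
  also have "\<dots> = SP y (\<lambda>p zs. SP zs (F2 x' p))" by (rule e2)
  also have "\<dots> = SP y' (\<lambda>p zs. SP zs (F2 x' p))" by (rule veqR3_use[OF y t2[of x']])
  also have "\<dots> = SP (mY x' y') (\<lambda>p zs. SP zs (T p))" by (rule e2[symmetric])
  finally show "SP (mY x y) (\<lambda>p zs. SP zs (T p)) = SP (mY x' y') (\<lambda>p zs. SP zs (T p))" .
qed

lemmas cusimps = p1.P.hcom_counitL p1.P.hcom_counitR p2.U.co_counit p2.U.rho_counit p1.A.co_counit

lemma salgX: "salg XX mX [([(uP,uA)],uU)]"
  unfolding salg_def
proof (intro conjI allI impI)
  show "svs XX" by (rule svs_tens)
  show "veq XX (mX x y) (mX x' y')" if "veq XX x x'" "veq XX y y'" for x x' y y' using congX that by blast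
  show "veq XX (mX (vadd XX x y) z) (vadd XX (mX x z) (mX y z))" for x y z
    by (rule veqL3_goal) simp
  show "veq XX (mX x (vadd XX y z)) (vadd XX (mX x y) (mX x z))" for x y z
    by (rule veqL3_goal) simp
  show "veq XX (mX (vsc XX c x) y) (vsc XX c (mX x y))" for c x y
    apply (rule veqL3_goal) subgoal premises prems for T
      by (simp add: tril_rules[OF prems] tril_prules[OF prems] simpset) done
  show "veq XX (mX x (vsc XX c y)) (vsc XX c (mX x y))" for c x y
    apply (rule veqL3_goal) subgoal premises prems for T
      by (simp add: tril_rules[OF prems] tril_prules[OF prems] simpset) done
  show "veq XX (mX (mX x y) z) (mX x (mX y z))" for x y z by (rule assocX)
  show "veq XX (mX [([(uP, uA)], uU)] x) x" for x
    apply (rule veqL3_goal) subgoal premises prems for T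
      by (simp add: tril_rules[OF prems] tril_prules[OF prems] simpset cusimps mult.assoc distrib_left) done
  show "veq XX (mX x [([(uP, uA)], uU)]) x" for x
    apply (rule veqL3_goal) subgoal premises prems for T
      by (simp add: tril_rules[OF prems] tril_prules[OF prems] simpset cusimps mult.assoc distrib_left) done
qed

lemma veq_sym: "veq (tens V W) x y \<Longrightarrow> veq (tens V W) y x" by (simp add: veq_tens)
lemma veq_trans[trans]: "veq (tens V W) x y \<Longrightarrow> veq (tens V W) y z \<Longrightarrow> veq (tens V W) x z" by (simp add: veq_tens)

lemma slin_re: "slin XX YY reassoc"
  unfolding slin_def
proof (intro conjI allI impI)
  fix x x' assume x: "veq XX x x'"
  show "veq YY (reassoc x) (reassoc x')"
  proof (rule veqR3_goal)
    fix T :: "'p \<Rightarrow> 'a \<Rightarrow> 'u \<Rightarrow> 'k" assume T: "tril sP sA sU T"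
    show "SP (reassoc x) (\<lambda>v zs. SP zs (T v)) = SP (reassoc x') (\<lambda>v zs. SP zs (T v))"
      using veqL3_use[OF x T] by simp
  qed
next
  fix x y show "veq YY (reassoc (vadd XX x y)) (vadd YY (reassoc x) (reassoc y))"
    by (rule veqR3_goal) simp
next
  fix c x show "veq YY (reassoc (vsc XX c x)) (vsc YY c (reassoc x))"
    apply (rule veqR3_goal) subgoal premises prems for T
      by (simp add: tril_rules[OF prems] tril_prules[OF prems]) done
qed

lemma re_inj: "veq YY (reassoc x) (reassoc x') \<Longrightarrow> veq XX x x'"
proof (rule veqL3_goal)
  fix T :: "'p \<Rightarrow> 'a \<Rightarrow> 'u \<Rightarrow> 'k" assume T: "tril sP sA sU T" and x: "veq YY (reassoc x) (reassoc x')"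
  show "SP x (\<lambda>zs u. SP zs (\<lambda>v w. T v w u)) = SP x' (\<lambda>zs u. SP zs (\<lambda>v w. T v w u))"
    using veqR3_use[OF x T] by simp
qed

definition unre :: "('p \<times> ('a \<times> 'u) list) list \<Rightarrow> (('p \<times> 'a) list \<times> 'u) list" where
  "unre y = concat (map (\<lambda>(p,zs). map (\<lambda>(a,u). ([(p,a)],u)) zs) y)"

lemma re_surj: "veq YY (reassoc (unre y)) y"
  by (rule veqR3_goal) (simp add: unre_def)

lemma assocY: "veq YY (mY (mY y1 y2) y3) (mY y1 (mY y2 y3))"
proof -
  let ?r = reassoc
  define x1 where "x1 = unre y1"
  define x2 where "x2 = unre y2"
  define x3 where "x3 = unre y3"
  have s1: "veq YY (?r x1) y1" and s2: "veq YY (?r x2) y2" and s3: "veq YY (?r x3) y3"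
    unfolding x1_def x2_def x3_def by (rule re_surj)+
  have "veq YY (mY (mY y1 y2) y3) (mY (mY (?r x1) (?r x2)) (?r x3))"
    by (rule congY[OF congY[OF veq_sym[OF s1] veq_sym[OF s2]] veq_sym[OF s3]])
  also have "veq YY \<dots> (mY (?r (mX x1 x2)) (?r x3))"
    by (rule congY[OF veq_sym[OF mulXY] veq_refl])
  also have "veq YY \<dots> (?r (mX (mX x1 x2) x3))"
    by (rule veq_sym[OF mulXY])
  also have "veq YY \<dots> (?r (mX x1 (mX x2 x3)))"
    using slin_re assocX by (simp add: slin_def)
  also have "veq YY \<dots> (mY (?r x1) (?r (mX x2 x3)))"
    by (rule mulXY)
  also have "veq YY \<dots> (mY (?r x1) (mY (?r x2) (?r x3)))"
    by (rule congY[OF veq_refl mulXY])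
  also have "veq YY \<dots> (mY y1 (mY y2 y3))"
    by (rule congY[OF s1 congY[OF s2 s3]])
  finally show ?thesis .
qed

lemma salgY: "salg YY mY [(uP,[(uA,uU)])]"
  unfolding salg_def
proof (intro conjI allI impI)
  show "svs YY" by (rule svs_tens)
  show "veq YY (mY x y) (mY x' y')" if "veq YY x x'" "veq YY y y'" for x x' y y' using congY that by blast
  show "veq YY (mY (vadd YY x y) z) (vadd YY (mY x z) (mY y z))" for x y z
    by (rule veqR3_goal) simp
  show "veq YY (mY x (vadd YY y z)) (vadd YY (mY x y) (mY x z))" for x y z
    by (rule veqR3_goal) simp
  show "veq YY (mY (vsc YY c x) y) (vsc YY c (mY x y))" for c x y
    apply (rule veqR3_goal) subgoal premises prems for T
      by (simp add: tril_rules[OF prems] tril_prules[OF prems] simpset) done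
  show "veq YY (mY x (vsc YY c y)) (vsc YY c (mY x y))" for c x y
    apply (rule veqR3_goal) subgoal premises prems for T
      by (simp add: tril_rules[OF prems] tril_prules[OF prems] simpset) done
  show "veq YY (mY (mY x y) z) (mY x (mY y z))" for x y z by (rule assocY)
  show "veq YY (mY [(uP, [(uA, uU)])] x) x" for x
    apply (rule veqR3_goal) subgoal premises prems for T
      by (simp add: tril_rules[OF prems] tril_prules[OF prems] simpset cusimps mult.assoc distrib_left) done
  show "veq YY (mY x [(uP, [(uA, uU)])]) x" for x
    apply (rule veqR3_goal) subgoal premises prems for T
      by (simp add: tril_rules[OF prems] tril_prules[OF prems] simpset cusimps mult.assoc distrib_left) done
qed

lemma iso: "alg_iso XX YY mX [([(uP,uA)],uU)] mY [(uP,[(uA,uU)])] reassoc"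
  unfolding alg_iso_def
proof (intro conjI allI impI)
  show "salg XX mX [([(uP, uA)], uU)]" by (rule salgX)
  show "salg YY mY [(uP, [(uA, uU)])]" by (rule salgY)
  show "slin XX YY reassoc" by (rule slin_re)
  show "veq YY (reassoc (mX x x')) (mY (reassoc x) (reassoc x'))" for x x' by (rule mulXY)
  show "veq YY (reassoc [([(uP, uA)], uU)]) [(uP, [(uA, uU)])]" by (simp add: reassoc_def veq_refl)
  show "veq XX x x'" if "veq YY (reassoc x) (reassoc x')" for x x' using re_inj that .
  show "\<exists>x. veq YY (reassoc x) y" for y using re_surj by blast
qed

end

theorem proposition3p4:
  fixes H :: "('k::field, 'h::ab_group_add) bialg"
    and sP :: "'k \<Rightarrow> 'p::ab_group_add \<Rightarrow> 'p" and mP :: "'p \<Rightarrow> 'p \<Rightarrow> 'p" and uP :: 'p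
    and laP :: "'h \<Rightarrow> 'p \<Rightarrow> 'p" and raP :: "'p \<Rightarrow> 'h \<Rightarrow> 'p"
    and sA :: "'k \<Rightarrow> 'a::ab_group_add \<Rightarrow> 'a" and mA :: "'a \<Rightarrow> 'a \<Rightarrow> 'a" and uA :: 'a
    and laA :: "'h \<Rightarrow> 'a \<Rightarrow> 'a" and coA :: "'a \<Rightarrow> ('h \<times> 'a) list"
    and sU :: "'k \<Rightarrow> 'u::ab_group_add \<Rightarrow> 'u" and mU :: "'u \<Rightarrow> 'u \<Rightarrow> 'u" and uU :: 'u
    and lamU :: "'u \<Rightarrow> ('h \<times> 'u) list" and rhoU :: "'u \<Rightarrow> ('u \<times> 'h) list"
  assumes "bialgebra H"
    and "vector_space sP" and "bimodalg H (plainvs sP) mP uP laP raP"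
    and "vector_space sA" and "ydalg H (plainvs sA) mA uA laA coA"
    and "vector_space sU" and "bicomodalg H (plainvs sU) mU uU lamU rhoU"
  shows "bimodalg H (tens (plainvs sP) (plainvs sA)) (gsm_mul mP mA laP coA) [(uP, uA)]
           (sm_lact H laP laA) (sm_ract raP)
       \<and> bicomodalg H (tens (plainvs sA) (plainvs sU)) (gsm_mul mA mU laA lamU) [(uA, uU)]
           (sm_lco H coA lamU) (sm_rco rhoU)
       \<and> alg_iso (tens (tens (plainvs sP) (plainvs sA)) (plainvs sU))
           (tens (plainvs sP) (tens (plainvs sA) (plainvs sU)))
           (lr_mul (gsm_mul mP mA laP coA) mU (sm_lact H laP laA) (sm_ract raP) lamU rhoU)
           [([(uP, uA)], uU)]
           (lr_mul mP (gsm_mul mA mU laA lamU) laP raP (sm_lco H coA lamU) (sm_rco rhoU))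
           [(uP, [(uA, uU)])]
           reassoc"
proof -
  interpret part3 H sP mP uP laP raP sA mA uA laA coA sU mU uU lamU rhoU
    unfolding part3_def part1_def part2_def
    using assms bimodI ydmI bicomodI by blast
  show ?thesis using p1.bimodalg_X p2.bicomodalg_XA iso by blast
qed

end
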